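(* Let $n\ge1$, let $(w_k)_{k\ge2}$ be complex numbers, and let $h$ be a formal power series in one variable. Then $$\int\mathcal{D}_n(\psi,\bar\psi)\,h\big((\bar\psi,\psi)\big)\exp\Big[\sum_{\substack{A\subseteq\{1,\dots,n\}\\|A|\ge2}}w_{|A|}f_A^{(0)}\Big] =\int\mathcal{D}_n(\psi,\bar\psi)\,h\big((\bar\psi,\psi)\big)\exp\Big[n\sum_{k\ge2}w_k\frac{(\bar\psi,\psi)^{k-1}}{(k-1)!}\Big]\Big[1-\sum_{k\ge2}w_k\frac{(\bar\psi,\psi)^{k-1}}{(k-2)!}\Big]$$ $$=n!\,[\xi^n]\;h(\xi)\Big[1-\sum_{k\ge2}w_k\frac{\xi^{k-1}}{(k-2)!}\Big]\exp\Big[n\sum_{k\ge2}w_k\frac{\xi^{k-1}}{(k-1)!}\Big].$$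
   Context: Grassmann algebra over $\mathbb{C}$ generated by anticommuting $\psi_1,\dots,\psi_n,\bar\psi_1,\dots,\bar\psi_n$; $\int\mathcal{D}_n(\psi,\bar\psi)$ is the Berezin integral returning the coefficient of $\prod_{i=1}^n(\bar\psi_i\psi_i)$ (convention $\int d\bar\psi_i d\psi_i\,\bar\psi_i\psi_i=1$). $\tau_A:=\prod_{i\in A}\bar\psi_i\psi_i$ ($\tau_\emptyset=1$), $f_A^{(0)}:=\sum_{i\in A}\tau_{A\setminus\{i\}}-\sum_{i,j\in A,\,i\ne j}\bar\psi_i\psi_j\tau_{A\setminus\{i,j\}}$, $(\bar\psi,\psi):=\sum_i\bar\psi_i\psi_i$. $[\xi^n]$ denotes the coefficient of $\xi^n$. *)

theory Defs
  imports "HOL-Computational_Algebra.Formal_Power_Series" "HOL-Library.Function_Algebras"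
begin

text \<open>Grassmann algebra over the complex numbers with generators indexed by nat.
  An element is a coefficient function on finite sets S of generator indices;
  the basis monomial e_S is the product of the generators in S in increasing order.
  Addition / subtraction / zero are pointwise (Function_Algebras); the
  Grassmann product is gmul (NOT the pointwise times).\<close>

type_synonym grass = "nat set \<Rightarrow> complex"

definition inv_count :: "nat set \<Rightarrow> nat set \<Rightarrow> nat" where
  "inv_count S T = card {(s,t). s \<in> S \<and> t \<in> T \<and> t < s}"

text \<open>e_S e_T = (-1)^(inversions) e_(S \<union> T) for disjoint S, T, and 0 otherwise.\<close>
definition gmul :: "grass \<Rightarrow> grass \<Rightarrow> grass" where
  "gmul a b = (\<lambda>U. \<Sum>S\<in>Pow U. (-1) ^ inv_count S (U - S) * a S * b (U - S))"

definition gone :: grass where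
  "gone = (\<lambda>S. if S = {} then 1 else 0)"

definition gen :: "nat \<Rightarrow> grass" where
  "gen i = (\<lambda>S. if S = {i} then 1 else 0)"

definition gsc :: "complex \<Rightarrow> grass \<Rightarrow> grass" where
  "gsc c a = (\<lambda>S. c * a S)"

definition gpow :: "grass \<Rightarrow> nat \<Rightarrow> grass" where
  "gpow a k = (gmul a ^^ k) gone"

definition psib :: "nat \<Rightarrow> grass" where "psib i = gen (2 * i)"
definition psi :: "nat \<Rightarrow> grass" where "psi i = gen (2 * i + 1)"

definition pairg :: "nat \<Rightarrow> grass" where "pairg i = gmul (psib i) (psi i)"

text \<open>tau_A = prod_{i in A} psibar_i psi_i (the factors are even, so commute).\<close>
definition tau :: "nat set \<Rightarrow> grass" where
  "tau A = foldr gmul (map pairg (sorted_list_of_set A)) gone"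

definition f0 :: "nat set \<Rightarrow> grass" where
  "f0 A = (\<Sum>i\<in>A. tau (A - {i}))
        - (\<Sum>i\<in>A. \<Sum>j\<in>A - {i}. gmul (gmul (psib i) (psi j)) (tau (A - {i, j})))"

definition dotpsi :: "nat \<Rightarrow> grass" where
  "dotpsi n = (\<Sum>i\<in>{1..n}. pairg i)"

text \<open>Berezin integral: coefficient of prod_{i=1}^n (psibar_i psi_i); this product
  is exactly the basis monomial e_{2,3,...,2n+1} with sign +1.\<close>
definition berezin :: "nat \<Rightarrow> grass \<Rightarrow> complex" where
  "berezin n F = F {2..2 * n + 1}"

text \<open>Substitution of an element X with zero body (nilpotent) into a formal power
  series, in the algebra on the 2n generators: X^k = 0 for k > 2n, so the series is
  a finite sum.\<close>
definition gsubst :: "nat \<Rightarrow> complex fps \<Rightarrow> grass \<Rightarrow> grass" where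
  "gsubst n F X = (\<Sum>k\<le>2 * n + 1. gsc (fps_nth F k) (gpow X k))"

text \<open>Exponential in the algebra on 2n generators: exp(b + N) = e^b sum_k N^k/k!.\<close>
definition gexp :: "nat \<Rightarrow> grass \<Rightarrow> grass" where
  "gexp n X = gsc (exp (X {}))
     (\<Sum>k\<le>2 * n + 1. gsc (1 / fact k) (gpow (X - gsc (X {}) gone) k))"

text \<open>sum_{k>=2} w_k xi^(k-1)/(k-1)!  and  sum_{k>=2} w_k xi^(k-1)/(k-2)! as power series.\<close>
definition wser1 :: "(nat \<Rightarrow> complex) \<Rightarrow> complex fps" where
  "wser1 w = Abs_fps (\<lambda>m. if m = 0 then 0 else w (m + 1) / fact m)"

definition wser2 :: "(nat \<Rightarrow> complex) \<Rightarrow> complex fps" where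
  "wser2 w = Abs_fps (\<lambda>m. if m = 0 then 0 else w (m + 1) / fact (m - 1))"

end

theory Submission
  imports Defs
begin


lemma sum_fun_apply: "(sum f A) x = (\<Sum>a\<in>A. f a x)"
  by (induct A rule: infinite_finite_induct) auto

definition sg :: "nat set \<Rightarrow> nat set \<Rightarrow> complex" where
  "sg S T = (-1) ^ inv_count S T"

definition ind :: "nat set \<Rightarrow> grass" where
  "ind S = (\<lambda>U. if U = S then 1 else 0)"

lemma gmul_apply: "gmul a b U = (\<Sum>S\<in>Pow U. sg S (U - S) * a S * b (U - S))"
  by (simp add: gmul_def sg_def)

lemma gmul_inf: "infinite U \<Longrightarrow> gmul a b U = 0"
  by (simp add: gmul_apply)

lemma inv_count_un_left:
  assumes "finite S" "finite R" "finite T" "S \<inter> R = {}"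
  shows "inv_count (S \<union> R) T = inv_count S T + inv_count R T"
proof -
  have "{(s,t). s \<in> S \<union> R \<and> t \<in> T \<and> t < s} =
        {(s,t). s \<in> S \<and> t \<in> T \<and> t < s} \<union> {(s,t). s \<in> R \<and> t \<in> T \<and> t < s}" by auto
  moreover have "finite {(s,t). s \<in> S \<and> t \<in> T \<and> t < s}"
    by (rule finite_subset[of _ "S \<times> T"]) (use assms in auto)
  moreover have "finite {(s,t). s \<in> R \<and> t \<in> T \<and> t < s}"
    by (rule finite_subset[of _ "R \<times> T"]) (use assms in auto)
  ultimately show ?thesis unfolding inv_count_def
    by (subst card_Un_disjoint[symmetric]) (use assms in auto)
qed

lemma inv_count_un_right:
  assumes "finite S" "finite R" "finite T" "T \<inter> R = {}"
  shows "inv_count S (T \<union> R) = inv_count S T + inv_count S R"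
proof -
  have "{(s,t). s \<in> S \<and> t \<in> T \<union> R \<and> t < s} =
        {(s,t). s \<in> S \<and> t \<in> T \<and> t < s} \<union> {(s,t). s \<in> S \<and> t \<in> R \<and> t < s}" by auto
  moreover have "finite {(s,t). s \<in> S \<and> t \<in> T \<and> t < s}"
    by (rule finite_subset[of _ "S \<times> T"]) (use assms in auto)
  moreover have "finite {(s,t). s \<in> S \<and> t \<in> R \<and> t < s}"
    by (rule finite_subset[of _ "S \<times> R"]) (use assms in auto)
  ultimately show ?thesis unfolding inv_count_def
    by (subst card_Un_disjoint[symmetric]) (use assms in auto)
qed

lemma inv_count_swap:
  assumes "finite S" "finite T" "S \<inter> T = {}"
  shows "inv_count S T + inv_count T S = card S * card T"
proof -
  have "S \<times> T = {(s,t). s \<in> S \<and> t \<in> T \<and> t < s} \<union> (\<lambda>(a,b). (b,a)) ` {(t,s). t \<in> T \<and> s \<in> S \<and> s < t}"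
    using assms(3) by (auto simp: image_iff)
  moreover have "card ((\<lambda>(a,b). (b,a)) ` {(t,s). t \<in> T \<and> s \<in> S \<and> s < t}) = card {(t,s). t \<in> T \<and> s \<in> S \<and> s < t}"
    by (rule card_image) (auto simp: inj_on_def)
  moreover have "finite {(s,t). s \<in> S \<and> t \<in> T \<and> t < s}"
    by (rule finite_subset[of _ "S \<times> T"]) (use assms in auto)
  moreover have "finite {(t,s). t \<in> T \<and> s \<in> S \<and> s < t}"
    by (rule finite_subset[of _ "T \<times> S"]) (use assms in auto)
  moreover have "{(s,t). s \<in> S \<and> t \<in> T \<and> t < s} \<inter> (\<lambda>(a,b). (b,a)) ` {(t,s). t \<in> T \<and> s \<in> S \<and> s < t} = {}"
    by auto
  ultimately have "card (S \<times> T) = inv_count S T + inv_count T S"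
    unfolding inv_count_def by (simp add: card_Un_disjoint)
  then show ?thesis by (simp add: card_cartesian_product)
qed

lemma sg_un_left: "finite S \<Longrightarrow> finite R \<Longrightarrow> finite T \<Longrightarrow> S \<inter> R = {} \<Longrightarrow> sg (S \<union> R) T = sg S T * sg R T"
  by (simp add: sg_def inv_count_un_left power_add)

lemma sg_un_right: "finite S \<Longrightarrow> finite R \<Longrightarrow> finite T \<Longrightarrow> T \<inter> R = {} \<Longrightarrow> sg S (T \<union> R) = sg S T * sg S R"
  by (simp add: sg_def inv_count_un_right power_add)

lemma sg_sq: "sg S T * sg S T = 1"
  by (simp add: sg_def flip: power_add)

lemma sg_swap: "finite S \<Longrightarrow> finite T \<Longrightarrow> S \<inter> T = {} \<Longrightarrow> sg S T = (-1) ^ (card S * card T) * sg T S"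
proof -
  assume a: "finite S" "finite T" "S \<inter> T = {}"
  have "(-1::complex) ^ (card S * card T) * sg T S = (-1) ^ (inv_count S T + inv_count T S) * (-1) ^ inv_count T S"
    using inv_count_swap[OF a] by (simp add: sg_def)
  also have "\<dots> = sg S T * (sg T S * sg T S)" by (simp add: sg_def power_add)
  finally show ?thesis by (simp add: sg_sq)
qed

lemma sg_empty[simp]: "sg {} T = 1" "sg S {} = 1"
  by (auto simp: sg_def inv_count_def)


lemma gmul_add_left: "gmul (a + b) c = gmul a c + gmul b c"
  by (simp add: fun_eq_iff gmul_apply algebra_simps sum.distrib)
lemma gmul_add_right: "gmul c (a + b) = gmul c a + gmul c b"
  by (simp add: fun_eq_iff gmul_apply algebra_simps sum.distrib)
lemma gmul_diff_left: "gmul (a - b) c = gmul a c - gmul b c"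
  by (simp add: fun_eq_iff gmul_apply algebra_simps sum_subtractf)
lemma gmul_diff_right: "gmul c (a - b) = gmul c a - gmul c b"
  by (simp add: fun_eq_iff gmul_apply algebra_simps sum_subtractf)
lemma gmul_zero_left[simp]: "gmul 0 c = 0"
  by (simp add: fun_eq_iff gmul_apply)
lemma gmul_zero_right[simp]: "gmul c 0 = 0"
  by (simp add: fun_eq_iff gmul_apply)
lemma gmul_gsc_left: "gmul (gsc k a) c = gsc k (gmul a c)"
  by (simp add: fun_eq_iff gmul_apply gsc_def sum_distrib_left algebra_simps)
lemma gmul_gsc_right: "gmul c (gsc k a) = gsc k (gmul c a)"
  by (simp add: fun_eq_iff gmul_apply gsc_def sum_distrib_left algebra_simps)
lemma gmul_sum_left: "gmul (\<Sum>x\<in>A. f x) c = (\<Sum>x\<in>A. gmul (f x) c)"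
proof (induct A rule: infinite_finite_induct)
  case (insert x F) then show ?case by (simp only: sum.insert[OF insert(1,2)] gmul_add_left insert(3))
next
  case (infinite A) then show ?case by (simp only: sum.infinite[OF infinite] gmul_zero_left)
qed (simp only: sum.empty gmul_zero_left)
lemma gmul_sum_right: "gmul c (\<Sum>x\<in>A. f x) = (\<Sum>x\<in>A. gmul c (f x))"
proof (induct A rule: infinite_finite_induct)
  case (insert x F) then show ?case by (simp only: sum.insert[OF insert(1,2)] gmul_add_right insert(3))
next
  case (infinite A) then show ?case by (simp only: sum.infinite[OF infinite] gmul_zero_right)
qed (simp only: sum.empty gmul_zero_right)

lemma gsc_add: "gsc k (a + b) = gsc k a + gsc k b"
  by (simp add: fun_eq_iff gsc_def algebra_simps)
lemma gsc_diff: "gsc k (a - b) = gsc k a - gsc k b"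
  by (simp add: fun_eq_iff gsc_def algebra_simps)
lemma gsc_sum: "gsc k (\<Sum>x\<in>A. f x) = (\<Sum>x\<in>A. gsc k (f x))"
proof (induct A rule: infinite_finite_induct)
  case (insert x F) then show ?case by (simp only: sum.insert[OF insert(1,2)] gsc_add insert(3))
next
  case (infinite A) then show ?case by (simp add: gsc_def fun_eq_iff)
qed (simp add: gsc_def fun_eq_iff)
lemma gsc_gsc: "gsc k (gsc l a) = gsc (k * l) a"
  by (simp add: fun_eq_iff gsc_def)
lemma gsc_1[simp]: "gsc 1 a = a"
  by (simp add: fun_eq_iff gsc_def)
lemma gsc_0[simp]: "gsc 0 a = 0" "gsc k 0 = 0"
  by (simp_all add: fun_eq_iff gsc_def)
lemma gsc_add_scal: "gsc (k + l) a = gsc k a + gsc l a"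
  by (simp add: fun_eq_iff gsc_def algebra_simps)
lemma gsc_sum_scal: "gsc (\<Sum>x\<in>A. f x) a = (\<Sum>x\<in>A. gsc (f x) a)"
  by (induct A rule: infinite_finite_induct) (auto simp: gsc_add_scal)

lemma gmul_assoc: "gmul (gmul a b) c = gmul a (gmul b c)"
proof (rule ext)
  fix U
  show "gmul (gmul a b) c U = gmul a (gmul b c) U"
  proof (cases "finite U")
    case False then show ?thesis by (simp add: gmul_inf)
  next
    case fin: True
    have "gmul (gmul a b) c U = (\<Sum>S\<in>Pow U. \<Sum>R\<in>Pow S. sg S (U - S) * sg R (S - R) * a R * b (S - R) * c (U - S))"
      by (simp add: gmul_apply sum_distrib_left sum_distrib_right mult.assoc)
    also have "\<dots> = (\<Sum>(S,R)\<in>Sigma (Pow U) Pow. sg S (U - S) * sg R (S - R) * a R * b (S - R) * c (U - S))"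
      using fin by (subst sum.Sigma) (auto intro: finite_subset)
    also have "\<dots> = (\<Sum>(R,Q)\<in>Sigma (Pow U) (\<lambda>R. Pow (U - R)). sg R (U - R) * sg Q (U - R - Q) * a R * b Q * c (U - R - Q))"
    proof (rule sum.reindex_bij_witness[where i = "\<lambda>(R,Q). (R \<union> Q, R)" and j = "\<lambda>(S,R). (R, S - R)"])
      fix x assume x: "x \<in> Sigma (Pow U) Pow"
      obtain S R where xe: "x = (S,R)" by (cases x)
      with x have RS: "R \<subseteq> S" "S \<subseteq> U" by auto
      then have fR: "finite R" "finite S" "finite (U - S)" "finite (S - R)" using fin by (auto intro: finite_subset)
      have e1: "U - R - (S - R) = U - S" using RS by auto
      have "sg R (U - R) * sg (S - R) (U - S) = sg S (U - S) * sg R (S - R)"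
      proof -
        have "U - R = (S - R) \<union> (U - S)" using RS by auto
        then have "sg R (U - R) = sg R (S - R) * sg R (U - S)"
          using fR by (metis Diff_disjoint inf_commute sg_un_right Diff_Int_distrib2 Int_Diff Int_absorb Un_Diff_cancel)
        moreover have "sg S (U - S) = sg R (U - S) * sg (S - R) (U - S)"
        proof -
          have "S = R \<union> (S - R)" using RS by auto
          then show ?thesis using fR by (metis Diff_disjoint sg_un_left)
        qed
        ultimately show ?thesis by simp
      qed
      then show "(\<lambda>(R,Q). sg R (U - R) * sg Q (U - R - Q) * a R * b Q * c (U - R - Q)) ((\<lambda>(S,R). (R, S - R)) x) =
           (\<lambda>(S,R). sg S (U - S) * sg R (S - R) * a R * b (S - R) * c (U - S)) x"
        using RS by (simp add: xe e1 algebra_simps)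
    qed auto
    also have "\<dots> = (\<Sum>R\<in>Pow U. \<Sum>Q\<in>Pow (U - R). sg R (U - R) * sg Q (U - R - Q) * a R * b Q * c (U - R - Q))"
      using fin by (subst sum.Sigma) (auto intro: finite_subset)
    also have "\<dots> = gmul a (gmul b c) U"
      by (simp add: gmul_apply sum_distrib_left sum_distrib_right mult_ac Diff_Un)
    finally show ?thesis .
  qed
qed


lemma gone_ind: "gone = ind {}" by (simp add: gone_def ind_def fun_eq_iff)
lemma gen_ind: "gen i = ind {i}" by (simp add: gen_def ind_def fun_eq_iff)

lemma gmul_ind_right:
  "gmul K (ind T) U = (if T \<subseteq> U \<and> finite U then sg (U - T) T * K (U - T) else 0)"
proof (cases "finite U")
  case False then show ?thesis by (simp add: gmul_inf)
next
  case fin: True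
  show ?thesis
  proof (cases "T \<subseteq> U")
    case True
    have "gmul K (ind T) U = (\<Sum>S\<in>Pow U. if S = U - T then sg S (U - S) * K S else 0)"
      unfolding gmul_apply ind_def
    proof (rule sum.cong)
      fix S assume "S \<in> Pow U"
      then have "U - S = T \<longleftrightarrow> S = U - T" using True by auto
      then show "sg S (U - S) * K S * (if U - S = T then 1 else 0) = (if S = U - T then sg S (U - S) * K S else 0)"
        by simp
    qed simp
    also have "\<dots> = sg (U - T) T * K (U - T)"
      using fin True by (simp add: double_diff)
    finally show ?thesis using True fin by simp
  next
    case False
    have "gmul K (ind T) U = (\<Sum>S\<in>Pow U. 0)"
      unfolding gmul_apply ind_def by (rule sum.cong) (use False in auto)
    then show ?thesis using False by simp
  qed
qed

lemma gmul_ind_left: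
  "gmul (ind S) K U = (if S \<subseteq> U \<and> finite U then sg S (U - S) * K (U - S) else 0)"
proof (cases "finite U")
  case False then show ?thesis by (simp add: gmul_inf)
next
  case fin: True
  show ?thesis
  proof (cases "S \<subseteq> U")
    case True
    have "gmul (ind S) K U = (\<Sum>R\<in>Pow U. if R = S then sg R (U - R) * K (U - R) else 0)"
      unfolding gmul_apply ind_def
      by (rule sum.cong) auto
    also have "\<dots> = sg S (U - S) * K (U - S)"
      using fin True by simp
    finally show ?thesis using True fin by simp
  next
    case False
    have "gmul (ind S) K U = (\<Sum>R\<in>Pow U. 0)"
      unfolding gmul_apply ind_def by (rule sum.cong) (use False in auto)
    then show ?thesis using False by simp
  qed
qed

lemma gmul_ind_ind:
  assumes "finite S" "finite T"
  shows "gmul (ind S) (ind T) = (if S \<inter> T = {} then gsc (sg S T) (ind (S \<union> T)) else 0)"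
proof (rule ext)
  fix U
  have "(S \<subseteq> U \<and> U - S = T) \<longleftrightarrow> (S \<inter> T = {} \<and> U = S \<union> T)" by auto
  then show "gmul (ind S) (ind T) U = (if S \<inter> T = {} then gsc (sg S T) (ind (S \<union> T)) else 0) U"
    unfolding gmul_ind_left using assms by (auto simp: ind_def gsc_def)
qed


definition fsup :: "grass \<Rightarrow> bool" where "fsup a \<longleftrightarrow> (\<forall>U. infinite U \<longrightarrow> a U = 0)"

lemma gmul_one_left: "fsup a \<Longrightarrow> gmul gone a = a"
  by (auto simp: fun_eq_iff gone_ind gmul_ind_left fsup_def)
lemma gmul_one_right: "fsup a \<Longrightarrow> gmul a gone = a"
  by (auto simp: fun_eq_iff gone_ind gmul_ind_right fsup_def)
lemma fsup_gmul: "fsup (gmul a b)" by (simp add: fsup_def gmul_inf)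
lemma fsup_ind: "finite S \<Longrightarrow> fsup (ind S)" by (auto simp: fsup_def ind_def)
lemma fsup_add: "fsup a \<Longrightarrow> fsup b \<Longrightarrow> fsup (a + b)" by (simp add: fsup_def)
lemma fsup_diff: "fsup a \<Longrightarrow> fsup b \<Longrightarrow> fsup (a - b)" by (simp add: fsup_def)
lemma fsup_gsc: "fsup a \<Longrightarrow> fsup (gsc k a)" by (simp add: fsup_def gsc_def)
lemma fsup_sum: "(\<And>x. x \<in> A \<Longrightarrow> fsup (f x)) \<Longrightarrow> fsup (\<Sum>x\<in>A. f x)"
  by (simp add: fsup_def sum_fun_apply)
lemma fsup_gone: "fsup gone" by (simp add: gone_ind fsup_ind)
lemma fsup_zero: "fsup 0" by (simp add: fsup_def)


definition par :: "grass \<Rightarrow> nat \<Rightarrow> bool" where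
  "par a p \<longleftrightarrow> (\<forall>S. a S \<noteq> 0 \<longrightarrow> card S mod 2 = p)"

lemma par_mono: "(\<And>S. c S \<noteq> 0 \<Longrightarrow> a S \<noteq> 0 \<or> b S \<noteq> 0) \<Longrightarrow> par a p \<Longrightarrow> par b p \<Longrightarrow> par c p"
  unfolding par_def by blast
lemma par_add: "par a p \<Longrightarrow> par b p \<Longrightarrow> par (a + b) p" by (rule par_mono[where a=a and b=b]) auto
lemma par_diff: "par a p \<Longrightarrow> par b p \<Longrightarrow> par (a - b) p" by (rule par_mono[where a=a and b=b]) auto
lemma par_gsc: "par a p \<Longrightarrow> par (gsc k a) p" by (auto simp: par_def gsc_def)
lemma par_zero: "par 0 p" by (auto simp: par_def)

lemma par_sum: "(\<And>x. x \<in> A \<Longrightarrow> par (f x) p) \<Longrightarrow> par (\<Sum>x\<in>A. f x) p"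
proof -
  assume h: "\<And>x. x \<in> A \<Longrightarrow> par (f x) p"
  show ?thesis unfolding par_def
  proof (intro allI impI)
    fix S assume "(\<Sum>x\<in>A. f x) S \<noteq> 0"
    then have "(\<Sum>x\<in>A. f x S) \<noteq> 0" by (simp add: sum_fun_apply)
    then obtain x where "x \<in> A" "f x S \<noteq> 0" by (rule sum.not_neutral_contains_not_neutral)
    then show "card S mod 2 = p" using h by (auto simp: par_def)
  qed
qed

lemma par_ind: "card S mod 2 = p \<Longrightarrow> par (ind S) p" by (auto simp: par_def ind_def)

lemma par_gmul: "par a p \<Longrightarrow> par b q \<Longrightarrow> par (gmul a b) ((p + q) mod 2)"
proof -
  assume pa: "par a p" and pb: "par b q"
  show ?thesis unfolding par_def
  proof (intro allI impI)
    fix U assume nz: "gmul a b U \<noteq> 0"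
    then have fin: "finite U" using gmul_inf by blast
    from nz obtain S where S: "S \<in> Pow U" "sg S (U - S) * a S * b (U - S) \<noteq> 0"
      unfolding gmul_apply by (rule sum.not_neutral_contains_not_neutral)
    then have "a S \<noteq> 0" "b (U - S) \<noteq> 0" by auto
    then have "card S mod 2 = p" "card (U - S) mod 2 = q" using pa pb unfolding par_def by blast+
    moreover have "card U = card S + card (U - S)"
    proof -
      have sub: "S \<subseteq> U" using S by auto
      have "card (U - S) = card U - card S" using sub fin by (meson card_Diff_subset finite_subset)
      moreover have "card S \<le> card U" using sub fin by (rule card_mono[rotated])
      ultimately show ?thesis by linarith
    qed
    ultimately show "card U mod 2 = (p + q) mod 2" by (metis mod_add_eq)
  qed
qed


lemma neg1_pow: "(-1::complex) ^ n = (if even n then 1 else -1)" by simp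

lemma gmul_comm_par:
  assumes pa: "par a p" and pb: "par b q"
  shows "gmul a b = gsc ((-1) ^ (p * q)) (gmul b a)"
proof (rule ext)
  fix U
  show "gmul a b U = gsc ((-1) ^ (p * q)) (gmul b a) U"
  proof (cases "finite U")
    case False then show ?thesis by (simp add: gmul_inf gsc_def)
  next
    case fin: True
    have "gmul b a U = (\<Sum>S\<in>Pow U. sg (U - S) S * b (U - S) * a S)"
      unfolding gmul_apply
      by (rule sum.reindex_bij_witness[where i = "\<lambda>S. U - S" and j = "\<lambda>S. U - S"]) (auto simp: double_diff)
    then have "gsc ((-1) ^ (p * q)) (gmul b a) U = (\<Sum>S\<in>Pow U. (-1) ^ (p * q) * (sg (U - S) S * b (U - S) * a S))"
      by (simp add: gsc_def sum_distrib_left)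
    also have "\<dots> = (\<Sum>S\<in>Pow U. sg S (U - S) * a S * b (U - S))"
    proof (rule sum.cong)
      fix S assume S: "S \<in> Pow U"
      show "(-1) ^ (p * q) * (sg (U - S) S * b (U - S) * a S) = sg S (U - S) * a S * b (U - S)"
      proof (cases "a S = 0 \<or> b (U - S) = 0")
        case True then show ?thesis by auto
      next
        case False
        then have c: "card S mod 2 = p" "card (U - S) mod 2 = q" using pa pb unfolding par_def by blast+
        have fS: "finite S" "finite (U - S)" using S fin by (auto intro: finite_subset)
        have "sg S (U - S) = (-1) ^ (card S * card (U - S)) * sg (U - S) S"
          by (rule sg_swap) (use fS in auto)
        moreover have "(-1::complex) ^ (card S * card (U - S)) = (-1) ^ (p * q)"
        proof -
          have "even (card S) \<longleftrightarrow> even p" "even (card (U - S)) \<longleftrightarrow> even q"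
            using c by presburger+
          then have "even (card S * card (U - S)) \<longleftrightarrow> even (p * q)" by simp
          then show ?thesis by (simp only: neg1_pow)
        qed
        ultimately show ?thesis by (simp add: algebra_simps)
      qed
    qed simp
    finally show ?thesis by (simp add: gmul_apply)
  qed
qed

lemma gmul_comm_even: "par a 0 \<Longrightarrow> par b q \<Longrightarrow> gmul a b = gmul b a"
  using gmul_comm_par[of a 0 b q] by simp
lemma gmul_comm_even2: "par a p \<Longrightarrow> par b 0 \<Longrightarrow> gmul a b = gmul b a"
  using gmul_comm_par[of a p b 0] by simp
lemma gmul_anti_odd: "par a 1 \<Longrightarrow> par b 1 \<Longrightarrow> gmul a b = gsc (-1) (gmul b a)"
  using gmul_comm_par[of a 1 b 1] by simp
lemma gmul_odd_sq: "par a 1 \<Longrightarrow> gmul a a = 0"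
proof -
  assume h1: "par a 1"
  have "gmul a a = gsc (-1) (gmul a a)" by (rule gmul_anti_odd[OF h1 h1])
  then have h: "\<And>U. gmul a a U = - gmul a a U" by (metis gsc_def mult_minus1)
  show ?thesis
  proof (rule ext)
    fix U
    have "gmul a a U = - gmul a a U" by (rule h)
    then have "2 * gmul a a U = 0" by simp
    then show "gmul a a U = 0 U" by simp
  qed
qed




definition pairs :: "nat set \<Rightarrow> nat set" where
  "pairs B = (\<lambda>i. 2 * i) ` B \<union> (\<lambda>i. 2 * i + 1) ` B"

lemma mem_pairs: "x \<in> pairs B \<longleftrightarrow> x div 2 \<in> B"
proof -
  have a: "x \<in> pairs B \<longleftrightarrow> (\<exists>i\<in>B. x = 2 * i \<or> x = 2 * i + 1)" by (auto simp: pairs_def)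
  have b: "\<And>i. (x = 2 * i \<or> x = 2 * i + 1) \<longleftrightarrow> i = x div 2" by presburger
  show ?thesis unfolding a b by auto
qed
lemma pairs_insert: "pairs (insert i A) = {2 * i, 2 * i + 1} \<union> pairs A" by (auto simp: pairs_def)

lemma pairs_finite: "finite B \<Longrightarrow> finite (pairs B)" by (simp add: pairs_def)
lemma pairs_un: "pairs (A \<union> B) = pairs A \<union> pairs B" by (auto simp: pairs_def)
lemma pairs_int: "pairs A \<inter> pairs B = {} \<longleftrightarrow> A \<inter> B = {}"
proof
  assume h: "pairs A \<inter> pairs B = {}"
  show "A \<inter> B = {}"
  proof (rule equals0I)
    fix i assume "i \<in> A \<inter> B"
    then have "2 * i \<in> pairs A \<inter> pairs B" by (simp add: mem_pairs)
    with h show False by simp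
  qed
next
  assume "A \<inter> B = {}" then show "pairs A \<inter> pairs B = {}" by (auto simp: mem_pairs)
qed
lemma pairs_inj: "pairs A = pairs B \<longleftrightarrow> A = B"
proof
  assume h: "pairs A = pairs B"
  show "A = B"
  proof (rule set_eqI)
    fix i
    have "i \<in> A \<longleftrightarrow> 2 * i \<in> pairs A" by (simp add: mem_pairs)
    also have "\<dots> \<longleftrightarrow> 2 * i \<in> pairs B" by (simp add: h)
    also have "\<dots> \<longleftrightarrow> i \<in> B" by (simp add: mem_pairs)
    finally show "i \<in> A \<longleftrightarrow> i \<in> B" .
  qed
qed simp
lemma pairs_empty[simp]: "pairs {} = {}" by (simp add: pairs_def)
lemma pairs_card: "finite B \<Longrightarrow> card (pairs B) = 2 * card B"
proof -
  assume f: "finite B"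
  have "card (pairs B) = card ((\<lambda>i. 2 * i) ` B) + card ((\<lambda>i. 2 * i + 1) ` B)"
    unfolding pairs_def using f by (intro card_Un_disjoint) (auto, presburger)
  also have "\<dots> = card B + card B"
    by (subst card_image, simp add: inj_on_def)+ simp
  finally show ?thesis by simp
qed
lemma pairs_range: "pairs {1..n} = {2..2 * n + 1}"
proof (rule set_eqI)
  fix x :: nat
  have "1 \<le> x div 2 \<longleftrightarrow> 2 \<le> x" by presburger
  moreover have "x div 2 \<le> n \<longleftrightarrow> x \<le> 2 * n + 1" by presburger
  ultimately show "x \<in> pairs {1..n} \<longleftrightarrow> x \<in> {2..2 * n + 1}" by (simp add: mem_pairs)
qed

lemma inv_count_single: "inv_count {s} T = card {t \<in> T. t < s}"
proof -
  have "{(s', t). s' \<in> {s} \<and> t \<in> T \<and> t < s'} = (\<lambda>t. (s, t)) ` {t \<in> T. t < s}" by auto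
  then show ?thesis unfolding inv_count_def by (simp add: card_image inj_on_def)
qed

lemma inv_count_pair_even:
  assumes "finite T" "2 * i \<notin> T"
  shows "even (inv_count {2 * i, 2 * i + 1} T)"
proof -
  have "inv_count {2 * i, 2 * i + 1} T = inv_count {2 * i} T + inv_count {2 * i + 1} T"
  proof -
    have "{2 * i, 2 * i + 1} = {2 * i} \<union> {2 * i + 1}" by auto
    then show ?thesis using inv_count_un_left[of "{2 * i}" "{2 * i + 1}" T] assms by simp
  qed
  moreover have "{t \<in> T. t < 2 * i + 1} = {t \<in> T. t < 2 * i}"
    using assms(2) by (auto simp: less_Suc_eq)
  ultimately show ?thesis by (simp add: inv_count_single)
qed

lemma inv_count_pairs_even:
  assumes "finite A" "finite B" "A \<inter> B = {}"
  shows "even (inv_count (pairs A) (pairs B))"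
  using assms
proof (induct A rule: finite_induct)
  case empty then show ?case by (simp add: inv_count_def)
next
  case (insert i A)
  have e: "pairs (insert i A) = {2 * i, 2 * i + 1} \<union> pairs A" by (rule pairs_insert)
  have "inv_count (pairs (insert i A)) (pairs B) = inv_count {2 * i, 2 * i + 1} (pairs B) + inv_count (pairs A) (pairs B)"
    unfolding e using insert by (intro inv_count_un_left) (auto simp: pairs_finite mem_pairs)
  moreover have "even (inv_count {2 * i, 2 * i + 1} (pairs B))"
    using insert by (intro inv_count_pair_even) (auto simp: pairs_finite mem_pairs)
  ultimately show ?case using insert by simp
qed

lemma pairg_ind: "pairg i = ind {2 * i, 2 * i + 1}"
proof -
  have "inv_count {2 * i} {2 * i + 1} = 0" by (simp add: inv_count_single)
  moreover have "{2 * i} \<union> {2 * i + 1} = {2 * i, 2 * i + 1}" by auto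
  ultimately show ?thesis
    by (simp add: pairg_def psib_def psi_def gen_ind gmul_ind_ind sg_def)
qed

lemma tau_ind: "finite B \<Longrightarrow> tau B = ind (pairs B)"
proof (induct "card B" arbitrary: B rule: less_induct)
  case less
  show ?case
  proof (cases "B = {}")
    case True then show ?thesis by (simp add: tau_def gone_ind)
  next
    case False
    define m where "m = Min B"
    have mB: "m \<in> B" using False less(2) by (simp add: m_def)
    have "card (B - {m}) < card B" using mB less(2) by (meson card_Diff1_less)
    then have IH: "tau (B - {m}) = ind (pairs (B - {m}))" using less by simp
    have "tau B = gmul (pairg m) (tau (B - {m}))"
      using False less(2) by (simp add: tau_def m_def sorted_list_of_set_nonempty)
    also have "\<dots> = gmul (ind {2 * m, 2 * m + 1}) (ind (pairs (B - {m})))" by (simp add: IH pairg_ind)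
    also have "\<dots> = ind (pairs B)"
    proof -
      have gt: "\<And>t. t \<in> pairs (B - {m}) \<Longrightarrow> 2 * m + 1 < t"
      proof -
        fix t assume "t \<in> pairs (B - {m})"
        then have "t div 2 \<in> B" "t div 2 \<noteq> m" by (auto simp: mem_pairs)
        then have "m \<le> t div 2" using less(2) m_def by simp
        with \<open>t div 2 \<noteq> m\<close> have "m < t div 2" by simp
        then show "2 * m + 1 < t" by linarith
      qed
      have E: "{(s,t). s \<in> {2 * m, 2 * m + 1} \<and> t \<in> pairs (B - {m}) \<and> t < s} = {}"
      proof (rule equals0I)
        fix x assume "x \<in> {(s,t). s \<in> {2 * m, 2 * m + 1} \<and> t \<in> pairs (B - {m}) \<and> t < s}"
        then obtain s t where "x = (s,t)" "s \<le> 2 * m + 1" "t \<in> pairs (B - {m})" "t < s" by auto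
        with gt[of t] show False by simp
      qed
      have "inv_count {2 * m, 2 * m + 1} (pairs (B - {m})) = 0"
        unfolding inv_count_def E by simp
      moreover have "{2 * m, 2 * m + 1} \<inter> pairs (B - {m}) = {}" using gt by (auto dest!: gt)
      moreover have "{2 * m, 2 * m + 1} \<union> pairs (B - {m}) = pairs B"
        using mB by (metis pairs_insert insert_Diff)
      ultimately show ?thesis
        using less(2) by (simp add: gmul_ind_ind sg_def pairs_finite)
    qed
    finally show ?thesis .
  qed
qed

lemma tau_mul:
  assumes "finite A" "finite B"
  shows "gmul (tau A) (tau B) = (if A \<inter> B = {} then tau (A \<union> B) else 0)"
proof -
  have "A \<inter> B = {} \<Longrightarrow> sg (pairs A) (pairs B) = 1"
    using inv_count_pairs_even[OF assms] by (simp add: sg_def)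
  then show ?thesis using assms
    by (simp add: tau_ind gmul_ind_ind pairs_finite pairs_int pairs_un)
qed

lemma par_tau: "finite B \<Longrightarrow> par (tau B) 0"
  by (simp add: tau_ind par_ind pairs_card)
lemma fsup_tau: "finite B \<Longrightarrow> fsup (tau B)"
  by (simp add: tau_ind fsup_ind pairs_finite)


definition Tn :: "nat \<Rightarrow> (nat set \<Rightarrow> complex) \<Rightarrow> grass" where
  "Tn n c = (\<Sum>B\<in>Pow {1..n}. gsc (c B) (tau B))"

lemma Tn_cong: "(\<And>B. B \<subseteq> {1..n} \<Longrightarrow> c B = d B) \<Longrightarrow> Tn n c = Tn n d"
  unfolding Tn_def by (rule sum.cong) auto

lemma gsc_diff_scal: "gsc (k - l) a = gsc k a - gsc l a"
  by (simp add: fun_eq_iff gsc_def algebra_simps)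

lemma Tn_add: "Tn n (\<lambda>B. c B + d B) = Tn n c + Tn n d"
  by (simp add: Tn_def gsc_add_scal sum.distrib)
lemma Tn_diff: "Tn n (\<lambda>B. c B - d B) = Tn n c - Tn n d"
  by (simp add: Tn_def gsc_diff_scal sum_subtractf)
lemma Tn_gsc: "gsc k (Tn n c) = Tn n (\<lambda>B. k * c B)"
  by (simp add: Tn_def gsc_sum gsc_gsc)
lemma Tn_sum: "(\<Sum>x\<in>A. Tn n (c x)) = Tn n (\<lambda>B. \<Sum>x\<in>A. c x B)"
  unfolding Tn_def gsc_sum_scal by (rule sum.swap)
lemma Tn_zero: "Tn n (\<lambda>B. 0) = 0"
  by (simp add: Tn_def)

lemma Tn_apply: "Tn n c U = (\<Sum>B\<in>Pow {1..n}. if U = pairs B then c B else 0)"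
  unfolding Tn_def sum_fun_apply
proof (rule sum.cong)
  fix B assume "B \<in> Pow {1..n}"
  then have "finite B" by (auto intro: finite_subset)
  then show "gsc (c B) (tau B) U = (if U = pairs B then c B else 0)"
    by (simp add: gsc_def tau_ind ind_def)
qed simp

lemma Tn_top: "Tn n c {2..2 * n + 1} = c {1..n}"
proof -
  have "Tn n c {2..2 * n + 1} = (\<Sum>B\<in>Pow {1..n}. if {1..n} = B then c B else 0)"
    by (simp only: Tn_apply pairs_range[symmetric] pairs_inj)
  also have "\<dots> = c {1..n}" by (subst sum.delta') auto
  finally show ?thesis .
qed

lemma empty_eq_pairs: "({} = pairs B) = ({} = B)"
  by (metis pairs_empty pairs_inj)

lemma Tn_empty: "Tn n c {} = c {}"
proof -
  have "Tn n c {} = (\<Sum>B\<in>Pow {1..n}. if {} = B then c B else 0)"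
    by (simp only: Tn_apply empty_eq_pairs)
  also have "\<dots> = c {}" by (subst sum.delta') auto
  finally show ?thesis .
qed

lemma par_Tn: "par (Tn n c) 0"
  unfolding Tn_def by (intro par_sum par_gsc par_tau) (auto intro: finite_subset)
lemma fsup_Tn: "fsup (Tn n c)"
  unfolding Tn_def by (intro fsup_sum fsup_gsc fsup_tau) (auto intro: finite_subset)

definition psupp :: "grass \<Rightarrow> bool" where
  "psupp a \<longleftrightarrow> (\<forall>U. a U \<noteq> 0 \<longrightarrow> (\<forall>k. 2 * k \<in> U \<longleftrightarrow> 2 * k + 1 \<in> U))"

lemma psupp_Tn: "psupp (Tn n c)"
  unfolding psupp_def
proof (intro allI impI)
  fix U k assume "Tn n c U \<noteq> 0"
  then obtain B where "B \<in> Pow {1..n}" "(if U = pairs B then c B else 0) \<noteq> 0"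
    unfolding Tn_apply by (rule sum.not_neutral_contains_not_neutral)
  then have "U = pairs B" by (auto split: if_splits)
  then show "2 * k \<in> U \<longleftrightarrow> 2 * k + 1 \<in> U" by (simp add: mem_pairs)
qed

lemma Tn_mult: "gmul (Tn n c) (Tn n d) = Tn n (\<lambda>B. \<Sum>B1\<in>Pow B. c B1 * d (B - B1))"
proof -
  let ?P = "Pow {1..n}"
  have fP: "finite ?P" by simp
  have "gmul (Tn n c) (Tn n d) = (\<Sum>B1\<in>?P. \<Sum>B2\<in>?P. gsc (c B1 * d B2) (gmul (tau B1) (tau B2)))"
    unfolding Tn_def by (simp only: gmul_sum_left, simp only: gmul_sum_right, simp only: gmul_gsc_left gmul_gsc_right gsc_gsc, simp add: ac_simps)
  also have "\<dots> = (\<Sum>B1\<in>?P. \<Sum>B2\<in>?P. if B1 \<inter> B2 = {} then gsc (c B1 * d B2) (tau (B1 \<union> B2)) else 0)"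
  proof (intro sum.cong refl)
    fix B1 B2 assume "B1 \<in> ?P" "B2 \<in> ?P"
    then have "finite B1" "finite B2" by (auto intro: finite_subset)
    then show "gsc (c B1 * d B2) (gmul (tau B1) (tau B2)) = (if B1 \<inter> B2 = {} then gsc (c B1 * d B2) (tau (B1 \<union> B2)) else 0)"
      by (simp add: tau_mul)
  qed
  also have "\<dots> = (\<Sum>(B1,B2)\<in>?P \<times> ?P. if B1 \<inter> B2 = {} then gsc (c B1 * d B2) (tau (B1 \<union> B2)) else 0)"
    by (simp only: sum.cartesian_product)
  also have "\<dots> = (\<Sum>x\<in>{x \<in> ?P \<times> ?P. case x of (B1, B2) \<Rightarrow> B1 \<inter> B2 = {}}. case x of (B1,B2) \<Rightarrow> gsc (c B1 * d B2) (tau (B1 \<union> B2)))"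
    by (subst sum.inter_filter) (auto intro!: sum.cong split: prod.splits)
  also have "\<dots> = (\<Sum>(B,B1)\<in>Sigma ?P Pow. gsc (c B1 * d (B - B1)) (tau B))"
  proof (rule sum.reindex_bij_witness[where i = "\<lambda>(B,B1). (B1, B - B1)" and j = "\<lambda>(B1,B2). (B1 \<union> B2, B1)"])
    fix x assume "x \<in> {x \<in> ?P \<times> ?P. case x of (B1, B2) \<Rightarrow> B1 \<inter> B2 = {}}"
    then obtain B1 B2 where "x = (B1, B2)" "B1 \<inter> B2 = {}" by auto
    then show "(case (case x of (B1, B2) \<Rightarrow> (B1 \<union> B2, B1)) of (B, B1) \<Rightarrow> gsc (c B1 * d (B - B1)) (tau B)) =
               (case x of (B1, B2) \<Rightarrow> gsc (c B1 * d B2) (tau (B1 \<union> B2)))"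
      by (simp add: Un_Diff Int_commute Diff_triv)
  qed auto
  also have "\<dots> = (\<Sum>B\<in>?P. \<Sum>B1\<in>Pow B. gsc (c B1 * d (B - B1)) (tau B))"
    by (subst sum.Sigma) (auto intro: finite_subset)
  also have "\<dots> = Tn n (\<lambda>B. \<Sum>B1\<in>Pow B. c B1 * d (B - B1))"
    unfolding Tn_def by (simp add: gsc_sum_scal)
  finally show ?thesis .
qed

lemma tau_single: "tau {i} = pairg i"
  by (simp add: tau_ind pairg_ind pairs_insert)

lemma dotpsi_Tn: "dotpsi n = Tn n (\<lambda>B. if card B = 1 then 1 else 0)"
proof -
  have "Tn n (\<lambda>B. if card B = 1 then 1 else 0) = (\<Sum>B\<in>Pow {1..n}. if card B = 1 then tau B else 0)"
    unfolding Tn_def by (rule sum.cong) auto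
  also have "\<dots> = (\<Sum>B\<in>{B\<in>Pow {1..n}. card B = 1}. tau B)"
    by (rule sum.inter_filter[symmetric]) simp
  also have "{B\<in>Pow {1..n}. card B = 1} = (\<lambda>i. {i}) ` {1..n}"
    by (auto simp: card_1_singleton_iff)
  also have "(\<Sum>B\<in>(\<lambda>i. {i}) ` {1..n}. tau B) = (\<Sum>i\<in>{1..n}. tau {i})"
    by (rule sum.reindex_cong[where l = "\<lambda>i. {i}"]) (auto simp: inj_on_def)
  finally show ?thesis by (simp add: dotpsi_def tau_single)
qed

lemma gone_Tn: "gone = Tn n (\<lambda>B. if B = {} then 1 else 0)"
proof -
  have "Tn n (\<lambda>B. if B = {} then 1 else 0) = (\<Sum>B\<in>Pow {1..n}. if B = {} then tau B else 0)"
    unfolding Tn_def by (rule sum.cong) auto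
  also have "\<dots> = tau {}" by simp
  finally show ?thesis by (simp add: tau_ind gone_ind)
qed

lemma sum_pow_card:
  assumes "finite B"
  shows "(\<Sum>B1\<in>Pow B. g (card B1)) = (\<Sum>k\<le>card B. of_nat (card B choose k) * g k)"
proof -
  have "(\<Sum>B1\<in>Pow B. g (card B1)) = (\<Sum>k\<in>{..card B}. \<Sum>B1\<in>{B1\<in>Pow B. card B1 = k}. g (card B1))"
    by (rule sum.group[symmetric]) (use assms in \<open>auto intro: card_mono\<close>)
  also have "\<dots> = (\<Sum>k\<le>card B. of_nat (card B choose k) * g k)"
  proof (rule sum.cong)
    fix k
    have "{B1\<in>Pow B. card B1 = k} = {B1. B1 \<subseteq> B \<and> card B1 = k}" by auto
    then have "card {B1\<in>Pow B. card B1 = k} = card B choose k" using assms by (simp add: n_subsets)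
    moreover have "(\<Sum>B1\<in>{B1\<in>Pow B. card B1 = k}. g (card B1)) = (\<Sum>B1\<in>{B1\<in>Pow B. card B1 = k}. g k)"
      by (rule sum.cong) auto
    ultimately show "(\<Sum>B1\<in>{B1\<in>Pow B. card B1 = k}. g (card B1)) = of_nat (card B choose k) * g k"
      by simp
  qed simp
  finally show ?thesis .
qed

lemma gpow_Suc: "gpow a (Suc k) = gmul a (gpow a k)"
  by (simp add: gpow_def)
lemma gpow_0: "gpow a 0 = gone"
  by (simp add: gpow_def)

lemma conv_card:
  assumes "finite B"
  shows "(\<Sum>B1\<in>Pow B. f (card B1) * g (card (B - B1))) = (\<Sum>k\<le>card B. of_nat (card B choose k) * (f k * g (card B - k)))"
proof -
  have "(\<Sum>B1\<in>Pow B. f (card B1) * g (card (B - B1))) = (\<Sum>B1\<in>Pow B. f (card B1) * g (card B - card B1))"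
  proof (rule sum.cong)
    fix B1 assume "B1 \<in> Pow B"
    then have "card (B - B1) = card B - card B1" using assms by (meson PowD card_Diff_subset finite_subset)
    then show "f (card B1) * g (card (B - B1)) = f (card B1) * g (card B - card B1)" by simp
  qed simp
  also have "\<dots> = (\<Sum>k\<le>card B. of_nat (card B choose k) * (f k * g (card B - k)))"
    by (rule sum_pow_card[OF assms])
  finally show ?thesis .
qed

lemma gpow_D: "gpow (dotpsi n) k = Tn n (\<lambda>B. if card B = k then fact k else 0)"
proof (induct k)
  case 0
  show ?case unfolding gpow_0 gone_Tn[of n]
  proof (rule Tn_cong)
    fix B assume "B \<subseteq> {1..n}"
    then have "finite B" by (auto intro: finite_subset)
    then show "(if B = {} then 1 else 0) = (if card B = 0 then fact 0 else 0)" by simp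
  qed
next
  case (Suc k)
  have "gpow (dotpsi n) (Suc k) = gmul (dotpsi n) (gpow (dotpsi n) k)" by (rule gpow_Suc)
  also have "\<dots> = Tn n (\<lambda>B. \<Sum>B1\<in>Pow B. (if card B1 = 1 then 1 else 0) * (if card (B - B1) = k then fact k else 0))"
    by (subst Suc, subst dotpsi_Tn, rule Tn_mult)
  also have "\<dots> = Tn n (\<lambda>B. if card B = Suc k then fact (Suc k) else 0)"
  proof (rule Tn_cong)
    fix B assume "B \<subseteq> {1..n}"
    then have fB: "finite B" by (auto intro: finite_subset)
    have "(\<Sum>B1\<in>Pow B. (if card B1 = 1 then 1 else 0) * (if card (B - B1) = k then fact k else 0)) =
          (\<Sum>j\<le>card B. of_nat (card B choose j) * ((if j = 1 then 1 else 0) * (if card B - j = k then fact k else 0)))"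
      by (rule conv_card[OF fB, where f = "\<lambda>j. if j = 1 then 1 else 0" and g = "\<lambda>j. if j = k then fact k else 0"])
    also have "\<dots> = (\<Sum>j\<le>card B. if j = 1 then of_nat (card B) * (if card B - 1 = k then fact k else 0) else 0)"
      by (rule sum.cong) auto
    also have "\<dots> = (if card B = Suc k then fact (Suc k) else 0)"
      by (cases "card B") (auto simp: algebra_simps)
    finally show "(\<Sum>B1\<in>Pow B. (if card B1 = 1 then 1 else 0) * (if card (B - B1) = k then fact k else 0)) =
          (if card B = Suc k then fact (Suc k) else 0)" .
  qed
  finally show ?case .
qed


definition phi :: "complex fps \<Rightarrow> nat set \<Rightarrow> complex" where
  "phi F B = fact (card B) * fps_nth F (card B)"

lemma card_le_n: "B \<subseteq> {1..n} \<Longrightarrow> card B \<le> n"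
  using card_mono[of "{1..n}" B] by simp

lemma gsubst_D: "gsubst n F (dotpsi n) = Tn n (phi F)"
proof -
  have "gsubst n F (dotpsi n) = (\<Sum>k\<le>2 * n + 1. Tn n (\<lambda>B. fps_nth F k * (if card B = k then fact k else 0)))"
    unfolding gsubst_def gpow_D Tn_gsc by simp
  also have "\<dots> = Tn n (\<lambda>B. \<Sum>k\<le>2 * n + 1. fps_nth F k * (if card B = k then fact k else 0))"
    by (rule Tn_sum)
  also have "\<dots> = Tn n (phi F)"
  proof (rule Tn_cong)
    fix B assume "B \<subseteq> {1..n}"
    then have "card B \<le> n" by (rule card_le_n)
    have "(\<Sum>k\<le>2 * n + 1. fps_nth F k * (if card B = k then fact k else 0)) =
          (\<Sum>k\<le>2 * n + 1. if card B = k then fps_nth F k * fact k else 0)"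
      by (rule sum.cong) auto
    also have "\<dots> = phi F B" using \<open>card B \<le> n\<close> by (subst sum.delta') (auto simp: phi_def)
    finally show "(\<Sum>k\<le>2 * n + 1. fps_nth F k * (if card B = k then fact k else 0)) = phi F B" .
  qed
  finally show ?thesis .
qed

lemma binom_fact_c: "k \<le> m \<Longrightarrow> (of_nat (m choose k) :: complex) * (fact k * fact (m - k)) = fact m"
proof -
  assume "k \<le> m"
  then have "fact k * fact (m - k) * (m choose k) = fact m" by (rule binomial_fact_lemma)
  then have "(of_nat (fact k * fact (m - k) * (m choose k)) :: complex) = of_nat (fact m)" by simp
  then show ?thesis by (simp add: of_nat_fact algebra_simps)
qed

lemma gsubst_mult: "gmul (gsubst n F (dotpsi n)) (gsubst n G (dotpsi n)) = gsubst n (F * G) (dotpsi n)"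
proof -
  have "gmul (gsubst n F (dotpsi n)) (gsubst n G (dotpsi n)) = Tn n (\<lambda>B. \<Sum>B1\<in>Pow B. phi F B1 * phi G (B - B1))"
    unfolding gsubst_D by (rule Tn_mult)
  also have "\<dots> = Tn n (phi (F * G))"
  proof (rule Tn_cong)
    fix B assume "B \<subseteq> {1..n}"
    then have fB: "finite B" by (auto intro: finite_subset)
    have "(\<Sum>B1\<in>Pow B. phi F B1 * phi G (B - B1)) =
      (\<Sum>k\<le>card B. of_nat (card B choose k) * ((fact k * fps_nth F k) * (fact (card B - k) * fps_nth G (card B - k))))"
      unfolding phi_def by (rule conv_card[OF fB, where f = "\<lambda>k. fact k * fps_nth F k" and g = "\<lambda>k. fact k * fps_nth G k"])
    also have "\<dots> = (\<Sum>k\<le>card B. fact (card B) * (fps_nth F k * fps_nth G (card B - k)))"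
    proof (rule sum.cong)
      fix k assume "k \<in> {..card B}"
      then have "(of_nat (card B choose k) :: complex) * (fact k * fact (card B - k)) = fact (card B)"
        by (intro binom_fact_c) auto
      then show "of_nat (card B choose k) * ((fact k * fps_nth F k) * (fact (card B - k) * fps_nth G (card B - k))) =
        fact (card B) * (fps_nth F k * fps_nth G (card B - k))"
        by (metis (no_types, lifting) mult.assoc mult.left_commute)
    qed simp
    also have "\<dots> = phi (F * G) B"
      by (simp add: phi_def fps_mult_nth sum_distrib_left atLeast0AtMost)
    finally show "(\<Sum>B1\<in>Pow B. phi F B1 * phi G (B - B1)) = phi (F * G) B" .
  qed
  also have "\<dots> = gsubst n (F * G) (dotpsi n)" by (simp add: gsubst_D)
  finally show ?thesis .
qed

lemma gsubst_add: "gsubst n (F + G) X = gsubst n F X + gsubst n G X"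
  by (simp add: gsubst_def gsc_add_scal sum.distrib)
lemma gsubst_diff: "gsubst n (F - G) X = gsubst n F X - gsubst n G X"
  by (simp add: gsubst_def gsc_diff_scal sum_subtractf)
lemma gsubst_cmult: "gsubst n (fps_const c * F) X = gsc c (gsubst n F X)"
  by (simp only: gsubst_def gsc_sum gsc_gsc fps_mult_left_const_nth)
lemma gsubst_sum: "gsubst n (\<Sum>k\<in>A. F k) X = (\<Sum>k\<in>A. gsubst n (F k) X)"
  unfolding gsubst_def fps_sum_nth gsc_sum_scal by (rule sum.swap)
lemma gsubst_one: "gsubst n 1 (dotpsi n) = gone"
  unfolding gsubst_D gone_Tn[of n]
proof (rule Tn_cong)
  fix B assume "B \<subseteq> {1..n}"
  then have "finite B" by (auto intro: finite_subset)
  then show "phi 1 B = (if B = {} then 1 else 0)" by (simp add: phi_def)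
qed

lemma gsubst_cong: "(\<And>m. m \<le> n \<Longrightarrow> fps_nth F m = fps_nth G m) \<Longrightarrow> gsubst n F (dotpsi n) = gsubst n G (dotpsi n)"
  unfolding gsubst_D by (rule Tn_cong) (simp add: phi_def card_le_n)

lemma gpow_gsubst: "gpow (gsubst n F (dotpsi n)) k = gsubst n (F ^ k) (dotpsi n)"
  by (induct k) (simp_all add: gpow_0 gpow_Suc gsubst_one gsubst_mult)

lemma gsubst_empty: "gsubst n F (dotpsi n) {} = fps_nth F 0"
  by (simp add: gsubst_D Tn_empty phi_def)

lemma gexp_gsubst:
  assumes F0: "fps_nth F 0 = 0"
  shows "gexp n (gsubst n F (dotpsi n)) = gsubst n (fps_exp 1 oo F) (dotpsi n)"
proof -
  let ?X = "gsubst n F (dotpsi n)"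
  have "gexp n ?X = (\<Sum>k\<le>2 * n + 1. gsc (1 / fact k) (gpow ?X k))"
    by (simp add: gexp_def gsubst_empty F0)
  also have "\<dots> = (\<Sum>k\<le>2 * n + 1. gsubst n (fps_const (1 / fact k) * F ^ k) (dotpsi n))"
    by (simp add: gpow_gsubst gsubst_cmult)
  also have "\<dots> = gsubst n (\<Sum>k\<le>2 * n + 1. fps_const (1 / fact k) * F ^ k) (dotpsi n)"
    by (simp only: gsubst_sum)
  also have "\<dots> = gsubst n (fps_exp 1 oo F) (dotpsi n)"
  proof (rule gsubst_cong)
    fix m assume m: "m \<le> n"
    have z: "\<And>k. m < k \<Longrightarrow> fps_nth (F ^ k) m = 0" using startsby_zero_power_prefix[OF F0] by blast
    have "fps_nth (\<Sum>k\<le>2 * n + 1. fps_const (1 / fact k) * F ^ k) m = (\<Sum>k\<le>2 * n + 1. (1 / fact k) * fps_nth (F ^ k) m)"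
      by (simp add: fps_sum_nth fps_mult_left_const_nth)
    also have "\<dots> = (\<Sum>k\<in>{0..m}. (1 / fact k) * fps_nth (F ^ k) m)"
      by (rule sum.mono_neutral_right) (use m z in auto)
    also have "\<dots> = fps_nth (fps_exp 1 oo F) m"
      by (simp add: fps_compose_nth fps_exp_nth)
    finally show "fps_nth (\<Sum>k\<le>2 * n + 1. fps_const (1 / fact k) * F ^ k) m = fps_nth (fps_exp 1 oo F) m" .
  qed
  finally show ?thesis .
qed

lemma berezin_Tn: "berezin n (Tn n c) = c {1..n}"
  unfolding berezin_def by (rule Tn_top)

lemma berezin_gsubst: "berezin n (gsubst n F (dotpsi n)) = fact n * fps_nth F n"
  unfolding gsubst_D berezin_Tn phi_def by simp


definition PP :: "nat \<Rightarrow> grass" where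
  "PP n = (\<Sum>i\<in>{1..n}. \<Sum>j\<in>{1..n}. gmul (psib i) (psi j))"

definition Vs :: "(nat \<Rightarrow> complex) \<Rightarrow> complex fps" where
  "Vs w = Abs_fps (\<lambda>m. w (m + 2) / fact m)"

lemma psib_psi: "gmul (psib i) (psi j) = gsc (sg {2 * i} {2 * j + 1}) (ind {2 * i, 2 * j + 1})"
proof -
  have "2 * i \<noteq> 2 * j + 1" by presburger
  then have "{2 * i} \<inter> {2 * j + 1} = {}" by simp
  moreover have "{2 * i} \<union> {2 * j + 1} = {2 * i, 2 * j + 1}" by auto
  ultimately show ?thesis by (simp add: psib_def psi_def gen_ind gmul_ind_ind)
qed

lemma psibpsi_tau_zero:
  assumes "finite C" "i \<in> C \<or> j \<in> C"
  shows "gmul (gmul (psib i) (psi j)) (tau C) = 0"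
proof -
  have h: "\<not> {2 * i, 2 * j + 1} \<inter> pairs C = {}"
    using assms(2) by (auto simp: mem_pairs)
  have "gmul (ind {2 * i, 2 * j + 1}) (ind (pairs C)) = 0"
    by (subst gmul_ind_ind) (use h assms(1) pairs_finite in auto)
  then show ?thesis
    by (simp add: psib_psi gmul_gsc_left tau_ind assms(1))
qed

lemma par_psibpsi: "par (gmul (psib i) (psi j)) 0"
proof -
  have "2 * i \<noteq> 2 * j + 1" by presburger
  then have "card {2 * i, 2 * j + 1} = 2" by simp
  then show ?thesis unfolding psib_psi by (intro par_gsc par_ind) simp
qed

lemma W1D_Tn: "gsubst n (wser1 w) (dotpsi n) = Tn n (\<lambda>B. if B = {} then 0 else w (card B + 1))"
  unfolding gsubst_D
proof (rule Tn_cong)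
  fix B assume "B \<subseteq> {1..n}"
  then have "finite B" by (auto intro: finite_subset)
  then show "phi (wser1 w) B = (if B = {} then 0 else w (card B + 1))"
    by (simp add: phi_def wser1_def)
qed

lemma VD_Tn: "gsubst n (Vs w) (dotpsi n) = Tn n (\<lambda>B. w (card B + 2))"
  unfolding gsubst_D by (rule Tn_cong) (simp add: phi_def Vs_def)

lemma Tn_nonempty:
  "Tn n (\<lambda>B. if B = {} then 0 else u B) = (\<Sum>B\<in>{B\<in>Pow {1..n}. B \<noteq> {}}. gsc (u B) (tau B))"
proof -
  have "Tn n (\<lambda>B. if B = {} then 0 else u B) = (\<Sum>B\<in>Pow {1..n}. if B \<noteq> {} then gsc (u B) (tau B) else 0)"
    unfolding Tn_def by (rule sum.cong) auto
  also have "\<dots> = (\<Sum>B\<in>{B\<in>Pow {1..n}. B \<noteq> {}}. gsc (u B) (tau B))"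
    by (rule sum.inter_filter[symmetric]) simp
  finally show ?thesis .
qed

lemma fin_sub: "A \<subseteq> {1..(n::nat)} \<Longrightarrow> finite A"
  using finite_subset by blast
lemma fin_sub2: "A \<subseteq> {1..(n::nat)} - X \<Longrightarrow> finite A"
  using finite_subset by blast

lemma S1_reindex:
  "(\<Sum>A\<in>{A. A \<subseteq> {1..n} \<and> card A \<ge> 2}. \<Sum>i\<in>A. gsc (w (card A)) (tau (A - {i}))) =
   (\<Sum>i\<in>{1..n}. \<Sum>B\<in>{B\<in>Pow ({1..n} - {i}). B \<noteq> {}}. gsc (w (card B + 1)) (tau B))"
proof -
  let ?A = "{A. A \<subseteq> {1..n} \<and> card A \<ge> 2}"
  have fA: "finite ?A" by (rule finite_subset[of _ "Pow {1..n}"]) auto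
  have "(\<Sum>A\<in>?A. \<Sum>i\<in>A. gsc (w (card A)) (tau (A - {i}))) =
        (\<Sum>(A,i)\<in>Sigma ?A (\<lambda>A. A). gsc (w (card A)) (tau (A - {i})))"
    by (rule sum.Sigma) (use fA fin_sub in auto)
  also have "\<dots> = (\<Sum>(i,B)\<in>Sigma {1..n} (\<lambda>i. {B\<in>Pow ({1..n} - {i}). B \<noteq> {}}). gsc (w (card B + 1)) (tau B))"
  proof (rule sum.reindex_bij_witness[where j = "\<lambda>(A,i). (i, A - {i})" and i = "\<lambda>(i,B). (insert i B, i)"])
    fix a assume "a \<in> Sigma ?A (\<lambda>A. A)"
    then obtain A i where a: "a = (A,i)" "A \<subseteq> {1..n}" "card A \<ge> 2" "i \<in> A" by auto
    then have fA: "finite A" by (simp add: fin_sub)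
    have cA: "card A = card (A - {i}) + 1" using a fA by (simp add: card_Diff_singleton)
    show "(case (case a of (A, i) \<Rightarrow> (i, A - {i})) of (i, B) \<Rightarrow> gsc (w (card B + 1)) (tau B)) =
          (case a of (A, i) \<Rightarrow> gsc (w (card A)) (tau (A - {i})))"
      unfolding a(1) prod.case by (simp only: cA)
    show "(case (case a of (A, i) \<Rightarrow> (i, A - {i})) of (i, B) \<Rightarrow> (insert i B, i)) = a"
      using a by auto
    have "card (A - {i}) \<ge> 1" using a(3) cA by linarith
    then have "A - {i} \<noteq> {}" by (metis card.empty not_one_le_zero)
    then show "(case a of (A, i) \<Rightarrow> (i, A - {i})) \<in> Sigma {1..n} (\<lambda>i. {B\<in>Pow ({1..n} - {i}). B \<noteq> {}})"
      using a by auto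
  next
    fix b assume "b \<in> Sigma {1..n} (\<lambda>i. {B\<in>Pow ({1..n} - {i}). B \<noteq> {}})"
    then obtain i B where b: "b = (i,B)" "i \<in> {1..n}" "B \<subseteq> {1..n} - {i}" "B \<noteq> {}" by (cases b) force
    then have fB: "finite B" using fin_sub2 by blast
    then have "card B \<ge> 1" using b by (simp add: Suc_leI card_gt_0_iff)
    moreover have "i \<notin> B" using b by auto
    ultimately have "card (insert i B) \<ge> 2" using fB by simp
    then show "(case b of (i, B) \<Rightarrow> (insert i B, i)) \<in> Sigma ?A (\<lambda>A. A)"
      using b by auto
    show "(case (case b of (i, B) \<Rightarrow> (insert i B, i)) of (A, i) \<Rightarrow> (i, A - {i})) = b"
      using b by auto
  qed
  also have "\<dots> = (\<Sum>i\<in>{1..n}. \<Sum>B\<in>{B\<in>Pow ({1..n} - {i}). B \<noteq> {}}. gsc (w (card B + 1)) (tau B))"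
    by (rule sum.Sigma[symmetric]) auto
  finally show ?thesis .
qed

lemma PV1_i:
  assumes i: "i \<in> {1..n}"
  shows "gmul (gmul (psib i) (psi i)) (gsubst n (Vs w) (dotpsi n)) =
         (\<Sum>B\<in>{B\<in>Pow {1..n}. i \<in> B}. gsc (w (card B + 1)) (tau B))"
proof -
  have "gmul (gmul (psib i) (psi i)) (gsubst n (Vs w) (dotpsi n)) =
        (\<Sum>C\<in>Pow {1..n}. gsc (w (card C + 2)) (gmul (tau {i}) (tau C)))"
    unfolding VD_Tn Tn_def by (simp add: gmul_sum_right gmul_gsc_right tau_single pairg_def)
  also have "\<dots> = (\<Sum>C\<in>Pow {1..n}. if i \<notin> C then gsc (w (card C + 2)) (tau (insert i C)) else 0)"
  proof (rule sum.cong)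
    fix C assume "C \<in> Pow {1..n}"
    then have "finite C" using fin_sub by blast
    then show "gsc (w (card C + 2)) (gmul (tau {i}) (tau C)) = (if i \<notin> C then gsc (w (card C + 2)) (tau (insert i C)) else 0)"
      by (simp add: tau_mul)
  qed simp
  also have "\<dots> = (\<Sum>C\<in>{C\<in>Pow {1..n}. i \<notin> C}. gsc (w (card C + 2)) (tau (insert i C)))"
    by (rule sum.inter_filter[symmetric]) simp
  also have "\<dots> = (\<Sum>B\<in>{B\<in>Pow {1..n}. i \<in> B}. gsc (w (card B + 1)) (tau B))"
  proof (rule sum.reindex_bij_witness[where j = "insert i" and i = "\<lambda>B. B - {i}"])
    fix C assume C: "C \<in> {C\<in>Pow {1..n}. i \<notin> C}"
    then have "finite C" using fin_sub by blast
    then show "gsc (w (card (insert i C) + 1)) (tau (insert i C)) = gsc (w (card C + 2)) (tau (insert i C))"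
      using C by simp
  qed (use i in auto)
  finally show ?thesis .
qed

lemma sum_split_i:
  fixes n :: nat
  assumes i: "i \<in> {1..n}"
  shows "(\<Sum>B\<in>{B\<in>Pow {1..n}. B \<noteq> {}}. f B) =
         (\<Sum>B\<in>{B\<in>Pow ({1..n} - {i}). B \<noteq> {}}. f B) + (\<Sum>B\<in>{B\<in>Pow {1..n}. i \<in> B}. f B)"
proof -
  have "{B\<in>Pow {1..n}. B \<noteq> {}} = {B\<in>Pow ({1..n} - {i}). B \<noteq> {}} \<union> {B\<in>Pow {1..n}. i \<in> B}"
    by auto
  moreover have "{B\<in>Pow ({1..n} - {i}). B \<noteq> {}} \<inter> {B\<in>Pow {1..n}. i \<in> B} = {}" by auto
  moreover have f1: "finite {B\<in>Pow ({1..n} - {i}). B \<noteq> {}}"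
    by (rule finite_subset[of _ "Pow ({1..n} - {i})"]) auto
  moreover have f2: "finite {B\<in>Pow {1..n}. i \<in> B}"
    by (rule finite_subset[of _ "Pow {1..n}"]) auto
  ultimately show ?thesis by (simp only: sum.union_disjoint)
qed

lemma S2_reindex:
  fixes n :: nat and X :: "nat \<Rightarrow> nat \<Rightarrow> nat set \<Rightarrow> grass"
  shows "(\<Sum>A\<in>{A. A \<subseteq> {1..n} \<and> card A \<ge> 2}. \<Sum>i\<in>A. \<Sum>j\<in>A - {i}. gsc (w (card A)) (X i j (A - {i, j}))) =
   (\<Sum>i\<in>{1..n}. \<Sum>j\<in>{1..n} - {i}. \<Sum>C\<in>Pow ({1..n} - {i, j}). gsc (w (card C + 2)) (X i j C))"
proof -
  let ?A = "{A. A \<subseteq> {1..n} \<and> card A \<ge> 2}"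
  let ?T = "Sigma {1..n} (\<lambda>i. Sigma ({1..n} - {i}) (\<lambda>j. Pow ({1..n} - {i, j})))"
  have fA: "finite ?A" by (rule finite_subset[of _ "Pow {1..n}"]) auto
  have "(\<Sum>A\<in>?A. \<Sum>i\<in>A. \<Sum>j\<in>A - {i}. gsc (w (card A)) (X i j (A - {i, j}))) =
        (\<Sum>A\<in>?A. \<Sum>(i,j)\<in>Sigma A (\<lambda>i. A - {i}). gsc (w (card A)) (X i j (A - {i, j})))"
  proof (rule sum.cong)
    fix A assume "A \<in> ?A"
    then have fin: "finite A" using fin_sub by blast
    show "(\<Sum>i\<in>A. \<Sum>j\<in>A - {i}. gsc (w (card A)) (X i j (A - {i, j}))) =
        (\<Sum>(i,j)\<in>Sigma A (\<lambda>i. A - {i}). gsc (w (card A)) (X i j (A - {i, j})))"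
      by (rule sum.Sigma) (use fin in auto)
  qed simp
  also have "\<dots> = (\<Sum>(A,(i,j))\<in>Sigma ?A (\<lambda>A. Sigma A (\<lambda>i. A - {i})). gsc (w (card A)) (X i j (A - {i, j})))"
    by (rule sum.Sigma) (use fA fin_sub in auto)
  also have "\<dots> = (\<Sum>(i,(j,C))\<in>?T. gsc (w (card C + 2)) (X i j C))"
  proof (rule sum.reindex_bij_witness[where j = "\<lambda>(A,(i,j)). (i, (j, A - {i, j}))"
                                         and i = "\<lambda>(i,(j,C)). (insert i (insert j C), (i, j))"])
    fix a assume "a \<in> Sigma ?A (\<lambda>A. Sigma A (\<lambda>i. A - {i}))"
    then obtain A i j where a: "a = (A,(i,j))" "A \<subseteq> {1..n}" "card A \<ge> 2" "i \<in> A" "j \<in> A" "j \<noteq> i"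
      by (cases a) force
    then have fA: "finite A" using fin_sub by blast
    have cA: "card A = card (A - {i, j}) + 2"
    proof -
      have e: "A = insert i (insert j (A - {i, j}))" using a by auto
      have "card (insert i (insert j (A - {i, j}))) = card (A - {i, j}) + 2" using fA a by simp
      then show ?thesis using e by metis
    qed
    show "(case (case a of (A,(i,j)) \<Rightarrow> (i, (j, A - {i, j}))) of (i,(j,C)) \<Rightarrow> gsc (w (card C + 2)) (X i j C)) =
          (case a of (A,(i,j)) \<Rightarrow> gsc (w (card A)) (X i j (A - {i, j})))"
      unfolding a(1) prod.case by (simp only: cA)
    show "(case (case a of (A,(i,j)) \<Rightarrow> (i, (j, A - {i, j}))) of (i,(j,C)) \<Rightarrow> (insert i (insert j C), (i, j))) = a"
      using a by auto
    show "(case a of (A,(i,j)) \<Rightarrow> (i, (j, A - {i, j}))) \<in> ?T"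
      using a by auto
  next
    fix b assume "b \<in> ?T"
    then obtain i j C where b: "b = (i,(j,C))" "i \<in> {1..n}" "j \<in> {1..n}" "j \<noteq> i" "C \<subseteq> {1..n} - {i, j}"
      by (cases b) force
    then have fC: "finite C" using fin_sub2 by blast
    have "i \<notin> C" "j \<notin> C" using b by auto
    then have "card (insert i (insert j C)) = card C + 2" using b fC by simp
    then show "(case b of (i,(j,C)) \<Rightarrow> (insert i (insert j C), (i, j))) \<in> Sigma ?A (\<lambda>A. Sigma A (\<lambda>i. A - {i}))"
      using b by auto
    show "(case (case b of (i,(j,C)) \<Rightarrow> (insert i (insert j C), (i, j))) of (A,(i,j)) \<Rightarrow> (i, (j, A - {i, j}))) = b"
      using b \<open>i \<notin> C\<close> \<open>j \<notin> C\<close> by auto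
  qed
  also have "\<dots> = (\<Sum>i\<in>{1..n}. \<Sum>(j,C)\<in>Sigma ({1..n} - {i}) (\<lambda>j. Pow ({1..n} - {i, j})). gsc (w (card C + 2)) (X i j C))"
    by (rule sum.Sigma[symmetric]) auto
  also have "\<dots> = (\<Sum>i\<in>{1..n}. \<Sum>j\<in>{1..n} - {i}. \<Sum>C\<in>Pow ({1..n} - {i, j}). gsc (w (card C + 2)) (X i j C))"
    by (rule sum.cong) (auto intro: sum.Sigma[symmetric])
  finally show ?thesis .
qed


lemma PVij:
  fixes n :: nat
  assumes i: "i \<in> {1..n}" and j: "j \<in> {1..n}"
  shows "gmul (gmul (psib i) (psi j)) (gsubst n (Vs w) (dotpsi n)) =
         (\<Sum>C\<in>Pow ({1..n} - {i, j}). gsc (w (card C + 2)) (gmul (gmul (psib i) (psi j)) (tau C)))"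
proof -
  have "gmul (gmul (psib i) (psi j)) (gsubst n (Vs w) (dotpsi n)) =
        (\<Sum>C\<in>Pow {1..n}. gsc (w (card C + 2)) (gmul (gmul (psib i) (psi j)) (tau C)))"
    unfolding VD_Tn Tn_def by (simp only: gmul_sum_right gmul_gsc_right)
  also have "\<dots> = (\<Sum>C\<in>Pow ({1..n} - {i, j}). gsc (w (card C + 2)) (gmul (gmul (psib i) (psi j)) (tau C)))"
  proof (rule sum.mono_neutral_right)
    show "\<forall>C\<in>Pow {1..n} - Pow ({1..n} - {i, j}). gsc (w (card C + 2)) (gmul (gmul (psib i) (psi j)) (tau C)) = 0"
    proof
      fix C assume C: "C \<in> Pow {1..n} - Pow ({1..n} - {i, j})"
      then have "finite C" using fin_sub by blast
      moreover have "i \<in> C \<or> j \<in> C" using C by auto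
      ultimately show "gsc (w (card C + 2)) (gmul (gmul (psib i) (psi j)) (tau C)) = 0"
        by (simp add: psibpsi_tau_zero)
    qed
  qed auto
  finally show ?thesis .
qed

lemma exponent_identity:
  fixes n :: nat
  shows "(\<Sum>A\<in>{A. A \<subseteq> {1..n} \<and> card A \<ge> 2}. gsc (w (card A)) (f0 A)) =
         gsc (of_nat n) (gsubst n (wser1 w) (dotpsi n)) - gmul (PP n) (gsubst n (Vs w) (dotpsi n))"
proof -
  let ?A = "{A. A \<subseteq> {1..n} \<and> card A \<ge> 2}"
  let ?X = "\<lambda>i j C. gmul (gmul (psib i) (psi j)) (tau C)"
  let ?N = "\<lambda>i. (\<Sum>B\<in>{B\<in>Pow ({1..n} - {i}). B \<noteq> {}}. gsc (w (card B + 1)) (tau B))"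
  let ?I = "\<lambda>i. (\<Sum>B\<in>{B\<in>Pow {1..n}. i \<in> B}. gsc (w (card B + 1)) (tau B))"
  let ?Q = "\<lambda>i. (\<Sum>j\<in>{1..n} - {i}. \<Sum>C\<in>Pow ({1..n} - {i, j}). gsc (w (card C + 2)) (?X i j C))"
  let ?V = "gsubst n (Vs w) (dotpsi n)"
  have "(\<Sum>A\<in>?A. gsc (w (card A)) (f0 A)) =
        (\<Sum>A\<in>?A. \<Sum>i\<in>A. gsc (w (card A)) (tau (A - {i}))) -
        (\<Sum>A\<in>?A. \<Sum>i\<in>A. \<Sum>j\<in>A - {i}. gsc (w (card A)) (?X i j (A - {i, j})))"
    unfolding f0_def gsc_diff gsc_sum sum_subtractf ..
  also have "\<dots> = (\<Sum>i\<in>{1..n}. ?N i) - (\<Sum>i\<in>{1..n}. ?Q i)"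
    by (simp only: S1_reindex S2_reindex[where X = "\<lambda>i j C. gmul (gmul (psib i) (psi j)) (tau C)"])
  finally have L: "(\<Sum>A\<in>?A. gsc (w (card A)) (f0 A)) = (\<Sum>i\<in>{1..n}. ?N i) - (\<Sum>i\<in>{1..n}. ?Q i)" .
  have "gsc (of_nat n) (gsubst n (wser1 w) (dotpsi n)) = (\<Sum>i\<in>{1..n}. gsubst n (wser1 w) (dotpsi n))"
  proof -
    have "(of_nat n :: complex) = (\<Sum>i\<in>{1..n}. 1)" by simp
    then show ?thesis by (simp only: gsc_sum_scal gsc_1)
  qed
  also have "\<dots> = (\<Sum>i\<in>{1..n}. ?N i + ?I i)"
  proof (rule sum.cong)
    fix i assume i: "i \<in> {1..n}"
    show "gsubst n (wser1 w) (dotpsi n) = ?N i + ?I i"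
      unfolding W1D_Tn Tn_nonempty by (rule sum_split_i[OF i])
  qed simp
  finally have R1: "gsc (of_nat n) (gsubst n (wser1 w) (dotpsi n)) = (\<Sum>i\<in>{1..n}. ?N i + ?I i)" .
  have "gmul (PP n) ?V = (\<Sum>i\<in>{1..n}. \<Sum>j\<in>{1..n}. gmul (gmul (psib i) (psi j)) ?V)"
    unfolding PP_def by (simp only: gmul_sum_left)
  also have "\<dots> = (\<Sum>i\<in>{1..n}. ?I i + ?Q i)"
  proof (rule sum.cong)
    fix i assume i: "i \<in> {1..n}"
    have "(\<Sum>j\<in>{1..n}. gmul (gmul (psib i) (psi j)) ?V) =
          gmul (gmul (psib i) (psi i)) ?V + (\<Sum>j\<in>{1..n} - {i}. gmul (gmul (psib i) (psi j)) ?V)"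
      using i by (simp add: sum.remove)
    also have "\<dots> = ?I i + ?Q i"
    proof -
      have "(\<Sum>j\<in>{1..n} - {i}. gmul (gmul (psib i) (psi j)) ?V) = ?Q i"
        by (rule sum.cong) (use i in \<open>auto simp: PVij\<close>)
      then show ?thesis using PV1_i[OF i] by simp
    qed
    finally show "(\<Sum>j\<in>{1..n}. gmul (gmul (psib i) (psi j)) ?V) = ?I i + ?Q i" .
  qed simp
  finally have R2: "gmul (PP n) ?V = (\<Sum>i\<in>{1..n}. ?I i + ?Q i)" .
  show ?thesis unfolding L R1 R2 sum.distrib by (simp add: algebra_simps)
qed


lemma par_gone: "par gone 0" by (simp add: gone_ind par_ind)

lemma par_gpow: "par a 0 \<Longrightarrow> par (gpow a k) 0"
proof (induct k)
  case 0 then show ?case by (simp add: gpow_0 par_gone)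
next
  case (Suc k) then show ?case using par_gmul[of a 0 "gpow a k" 0] by (simp add: gpow_Suc)
qed

lemma fsup_gpow: "fsup (gpow a k)"
  by (cases k) (simp_all add: gpow_0 gpow_Suc fsup_gone fsup_gmul)

lemma gpow_one: "fsup a \<Longrightarrow> gpow a 1 = a"
  by (simp add: gpow_Suc gpow_0 gmul_one_right)

lemma gsc_Suc: "gsc (of_nat (Suc k)) x = gsc (of_nat k) x + x"
  by (simp add: fun_eq_iff gsc_def algebra_simps)

lemma gpow_binom:
  assumes pa: "par a 0" and pb: "par b 0" and bb: "gmul b b = 0" and fa: "fsup a" and fb: "fsup b"
  shows "gpow (a - b) (Suc k) = gpow a (Suc k) - gsc (of_nat (Suc k)) (gmul (gpow a k) b)"
proof (induct k)
  case 0
  show ?case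
    by (simp only: One_nat_def[symmetric] gpow_one[OF fsup_diff[OF fa fb]] gpow_one[OF fa] gpow_0
        gmul_one_left[OF fb] of_nat_1 gsc_1)
next
  case (Suc k)
  have c1: "gmul b (gpow a (Suc k)) = gmul (gpow a (Suc k)) b"
    by (rule gmul_comm_even[OF pb])  (rule par_gpow[OF pa])
  have c2: "gmul b (gmul (gpow a k) b) = 0"
  proof -
    have "gmul b (gmul (gpow a k) b) = gmul (gmul b (gpow a k)) b" by (simp add: gmul_assoc)
    also have "\<dots> = gmul (gmul (gpow a k) b) b" by (simp add: gmul_comm_even[OF pb par_gpow[OF pa]])
    also have "\<dots> = gmul (gpow a k) (gmul b b)" by (simp add: gmul_assoc)
    finally show ?thesis by (simp add: bb)
  qed
  have "gpow (a - b) (Suc (Suc k)) = gmul (a - b) (gpow a (Suc k) - gsc (of_nat (Suc k)) (gmul (gpow a k) b))"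
    by (simp only: gpow_Suc[of "a - b" "Suc k"] Suc)
  also have "\<dots> = gmul a (gpow a (Suc k)) - gsc (of_nat (Suc k)) (gmul a (gmul (gpow a k) b))
                   - gmul b (gpow a (Suc k)) + gsc (of_nat (Suc k)) (gmul b (gmul (gpow a k) b))"
    by (simp add: gmul_diff_left gmul_diff_right gmul_gsc_right gsc_diff algebra_simps)
  also have "\<dots> = gpow a (Suc (Suc k)) - gsc (of_nat (Suc (Suc k))) (gmul (gpow a (Suc k)) b)"
    by (simp only: c1 c2 c2[unfolded gmul_assoc[symmetric]] gsc_0 add_0_right gpow_Suc[of a "Suc k"] gmul_assoc[symmetric] gpow_Suc[of a k, symmetric]
          gsc_Suc[of "Suc k"]) (simp add: algebra_simps)
  finally show ?case .
qed

lemma gexp_apply0: "X {} = 0 \<Longrightarrow> gexp n X = (\<Sum>k\<le>2 * n + 1. gsc (1 / fact k) (gpow X k))"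
  by (simp add: gexp_def)

lemma fsup_gexp: assumes "X {} = 0" shows "fsup (gexp n X)"
  unfolding gexp_apply0[of X n, OF assms] by (intro fsup_sum fsup_gsc fsup_gpow)

lemma gexp_diff:
  assumes pa: "par a 0" and pb: "par b 0" and bb: "gmul b b = 0" and fa: "fsup a" and fb: "fsup b"
    and a0: "a {} = 0" and b0: "b {} = 0" and aN: "gpow a (2 * n + 1) = 0"
  shows "gexp n (a - b) = gmul (gexp n a) (gone - b)"
proof -
  let ?E = "\<lambda>M. (\<Sum>k\<le>M. gsc (1 / fact k) (gpow a k))"
  have Ea: "gexp n a = ?E (Suc (2 * n))" by (simp only: gexp_apply0[of a n, OF a0] Suc_eq_plus1)
  have EM: "?E (Suc (2 * n)) = ?E (2 * n)"
    by (simp only: sum.atMost_Suc aN[unfolded Suc_eq_plus1[symmetric]] gsc_0 add_0_right)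
  have ab0: "(a - b) {} = 0" using a0 b0 by simp
  have "gexp n (a - b) = (\<Sum>k\<le>Suc (2 * n). gsc (1 / fact k) (gpow (a - b) k))"
    by (simp only: gexp_apply0[of "a - b" n, OF ab0] Suc_eq_plus1)
  also have "\<dots> = gsc (1 / fact 0) (gpow (a - b) 0) + (\<Sum>k\<le>2 * n. gsc (1 / fact (Suc k)) (gpow (a - b) (Suc k)))"
    by (rule sum.atMost_Suc_shift)
  also have "\<dots> = gsc (1 / fact 0) (gpow a 0) + (\<Sum>k\<le>2 * n. gsc (1 / fact (Suc k)) (gpow a (Suc k)))
                  - (\<Sum>k\<le>2 * n. gsc (1 / fact k) (gmul (gpow a k) b))"
  proof -
    have H: "\<And>k. gsc (1 / fact (Suc k)) (gpow (a - b) (Suc k)) =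
              gsc (1 / fact (Suc k)) (gpow a (Suc k)) - gsc (1 / fact k) (gmul (gpow a k) b)"
    proof -
      fix k
      have g: "\<And>x y :: complex. x \<noteq> 0 \<Longrightarrow> 1 / (x * y) * x = 1 / y" by (simp add: field_simps)
      have nz: "(of_nat (Suc k) :: complex) \<noteq> 0" by (rule of_nat_neq_0)
      have "(1 / fact (Suc k) :: complex) * of_nat (Suc k) = 1 / fact k"
        by (simp only: fact_Suc of_nat_mult) (rule g[OF nz])
      then show "gsc (1 / fact (Suc k)) (gpow (a - b) (Suc k)) =
              gsc (1 / fact (Suc k)) (gpow a (Suc k)) - gsc (1 / fact k) (gmul (gpow a k) b)"
        by (simp add: gpow_binom[OF pa pb bb fa fb] gsc_diff gsc_gsc)
    qed
    then have "(\<Sum>k\<le>2 * n. gsc (1 / fact (Suc k)) (gpow (a - b) (Suc k))) =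
       (\<Sum>k\<le>2 * n. gsc (1 / fact (Suc k)) (gpow a (Suc k))) - (\<Sum>k\<le>2 * n. gsc (1 / fact k) (gmul (gpow a k) b))"
      by (simp only: H sum_subtractf)
    then show ?thesis by (simp only: gpow_0 add_diff_eq)
  qed
  also have "\<dots> = ?E (Suc (2 * n)) - gmul (?E (2 * n)) b"
    by (simp only: sum.atMost_Suc_shift[of "\<lambda>k. gsc (1 / fact k) (gpow a k)" "2 * n"] gmul_sum_left gmul_gsc_left)
  also have "\<dots> = ?E (Suc (2 * n)) - gmul (?E (Suc (2 * n))) b"
    by (simp only: EM)
  also have "\<dots> = gmul (gexp n a) (gone - b)"
    by (simp only: Ea[symmetric] gmul_diff_right gmul_one_right[OF fsup_gexp[of a n, OF a0]])
  finally show ?thesis .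
qed


lemma gmul_empty: "gmul x y {} = x {} * y {}"
  by (simp add: gmul_apply)

lemma gen_empty: "gen k {} = 0" by (simp add: gen_def)

lemma PP_empty: "PP n {} = 0"
  by (simp add: PP_def sum_fun_apply gmul_empty psib_def psi_def gen_empty)

lemma par_PP: "par (PP n) 0"
  unfolding PP_def by (simp add: par_sum par_psibpsi)

lemma par_gen: "par (gen k) 1" by (simp add: gen_ind par_ind)

lemma PP_sq: "gmul (PP n) (PP n) = 0"
proof -
  define x where "x = (\<Sum>i\<in>{1..n}. psib i)"
  define y where "y = (\<Sum>j\<in>{1..n}. psi j)"
  have px: "par x 1" unfolding x_def psib_def by (intro par_sum par_gen)
  have py: "par y 1" unfolding y_def psi_def by (intro par_sum par_gen)
  have P: "PP n = gmul x y" unfolding PP_def x_def y_def by (simp only: gmul_sum_left, simp only: gmul_sum_right)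
  have "gmul y (gmul x y) = gmul (gmul y x) y" by (simp add: gmul_assoc)
  also have "\<dots> = gmul (gsc (-1) (gmul x y)) y" by (simp add: gmul_anti_odd[OF py px])
  also have "\<dots> = gsc (-1) (gmul x (gmul y y))" by (simp add: gmul_gsc_left gmul_assoc)
  also have "\<dots> = 0" by (simp add: gmul_odd_sq[OF py])
  finally have "gmul y (gmul x y) = 0" .
  then show ?thesis unfolding P by (simp add: gmul_assoc)
qed

lemma berezin_diff: "berezin n (x - y) = berezin n x - berezin n y"
  by (simp add: berezin_def)
lemma berezin_sum: "berezin n (\<Sum>k\<in>A. f k) = (\<Sum>k\<in>A. berezin n (f k))"
  by (simp add: berezin_def sum_fun_apply)

lemma berezin_offdiag:
  fixes n :: nat
  assumes K: "psupp K" and i: "i \<in> {1..n}" and j: "j \<in> {1..n}" and ij: "i \<noteq> j"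
  shows "berezin n (gmul K (gmul (psib i) (psi j))) = 0"
proof -
  let ?U = "{2..2 * n + 1}"
  let ?T = "{2 * i, 2 * j + 1}"
  have "K (?U - ?T) = 0"
  proof (rule ccontr)
    assume "K (?U - ?T) \<noteq> 0"
    then have "2 * i \<in> ?U - ?T \<longleftrightarrow> 2 * i + 1 \<in> ?U - ?T" using K unfolding psupp_def by blast
    moreover have "2 * i \<notin> ?U - ?T" by simp
    moreover have "2 * i + 1 \<in> ?U - ?T" using i ij by auto
    ultimately show False by blast
  qed
  then show ?thesis
    unfolding berezin_def psib_psi gmul_gsc_right by (simp add: gsc_def gmul_ind_right)
qed

lemma berezin_KP:
  fixes n :: nat
  assumes K: "psupp K"
  shows "berezin n (gmul K (PP n)) = berezin n (gmul K (dotpsi n))"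
proof -
  have "berezin n (gmul K (PP n)) = (\<Sum>i\<in>{1..n}. \<Sum>j\<in>{1..n}. berezin n (gmul K (gmul (psib i) (psi j))))"
    unfolding PP_def by (simp only: gmul_sum_right berezin_sum)
  also have "\<dots> = (\<Sum>i\<in>{1..n}. berezin n (gmul K (pairg i)))"
  proof (rule sum.cong)
    fix i assume i: "i \<in> {1..n}"
    have "(\<Sum>j\<in>{1..n}. berezin n (gmul K (gmul (psib i) (psi j)))) =
          berezin n (gmul K (gmul (psib i) (psi i))) + (\<Sum>j\<in>{1..n} - {i}. berezin n (gmul K (gmul (psib i) (psi j))))"
      using i by (simp add: sum.remove)
    also have "(\<Sum>j\<in>{1..n} - {i}. berezin n (gmul K (gmul (psib i) (psi j)))) = 0"
      by (rule sum.neutral) (use i K berezin_offdiag in auto)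
    finally show "(\<Sum>j\<in>{1..n}. berezin n (gmul K (gmul (psib i) (psi j)))) = berezin n (gmul K (pairg i))"
      by (simp add: pairg_def)
  qed simp
  also have "\<dots> = berezin n (gmul K (dotpsi n))"
    unfolding dotpsi_def by (simp only: gmul_sum_right berezin_sum)
  finally show ?thesis .
qed

lemma gsubst_X: "gsubst n fps_X (dotpsi n) = dotpsi n"
  unfolding gsubst_D by (subst dotpsi_Tn, rule Tn_cong, simp add: phi_def fps_X_nth)

lemma wser2_eq: "wser2 w = fps_X * Vs w"
  by (rule fps_ext) (simp add: wser2_def Vs_def fps_X_mult_nth)

lemma gsubst_zero: "gsubst n 0 X = 0"
  by (simp add: gsubst_def)

lemma psupp_gsubst: "psupp (gsubst n F (dotpsi n))" by (simp add: gsubst_D psupp_Tn)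
lemma par_gsubst: "par (gsubst n F (dotpsi n)) 0" by (simp add: gsubst_D par_Tn)
lemma fsup_gsubst: "fsup (gsubst n F (dotpsi n))" by (simp add: gsubst_D fsup_Tn)


theorem mainTheorem6:
  fixes n :: nat and w :: "nat \<Rightarrow> complex" and h :: "complex fps"
  assumes "n \<ge> 1"
  shows "berezin n (gmul (gsubst n h (dotpsi n))
            (gexp n (\<Sum>A\<in>{A. A \<subseteq> {1..n} \<and> card A \<ge> 2}. gsc (w (card A)) (f0 A))))
       = berezin n (gmul (gmul (gsubst n h (dotpsi n))
            (gexp n (gsc (of_nat n) (gsubst n (wser1 w) (dotpsi n)))))
            (gone - gsubst n (wser2 w) (dotpsi n)))
     \<and> berezin n (gmul (gmul (gsubst n h (dotpsi n))
            (gexp n (gsc (of_nat n) (gsubst n (wser1 w) (dotpsi n)))))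
            (gone - gsubst n (wser2 w) (dotpsi n)))
       = fact n * fps_nth (h * (1 - wser2 w) * (fps_exp 1 oo (of_nat n * wser1 w))) n"
proof -
  let ?D = "dotpsi n"
  let ?H = "gsubst n h ?D"
  let ?a = "gsc (of_nat n) (gsubst n (wser1 w) ?D)"
  let ?V = "gsubst n (Vs w) ?D"
  let ?P = "PP n"
  let ?b = "gmul ?P ?V"
  let ?Ea = "gexp n ?a"
  let ?W2 = "gsubst n (wser2 w) ?D"
  define F1 where "F1 = fps_const (of_nat n) * wser1 w"
  have aF: "?a = gsubst n F1 ?D" by (simp add: F1_def gsubst_cmult)
  have F10: "fps_nth F1 0 = 0" by (simp add: F1_def wser1_def)
  have pa: "par ?a 0" unfolding aF by (rule par_gsubst)
  have fa: "fsup ?a" unfolding aF by (rule fsup_gsubst)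
  have a0: "?a {} = 0" unfolding aF by (simp add: gsubst_empty F10)
  have pP: "par ?P 0" by (rule par_PP)
  have pV: "par ?V 0" by (rule par_gsubst)
  have pb: "par ?b 0" using par_gmul[OF pP pV] by simp
  have fb: "fsup ?b" by (rule fsup_gmul)
  have b0: "?b {} = 0" by (simp add: gmul_empty PP_empty)
  have bb: "gmul ?b ?b = 0"
  proof -
    have "gmul ?b ?b = gmul ?P (gmul (gmul ?V ?P) ?V)" by (simp add: gmul_assoc)
    also have "\<dots> = gmul ?P (gmul (gmul ?P ?V) ?V)" by (simp add: gmul_comm_even[OF pV pP])
    also have "\<dots> = gmul (gmul ?P ?P) (gmul ?V ?V)" by (simp add: gmul_assoc)
    also have "\<dots> = 0" by (simp add: PP_sq)
    finally show ?thesis .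
  qed
  have aN: "gpow ?a (2 * n + 1) = 0"
  proof -
    have "gpow ?a (2 * n + 1) = gsubst n (F1 ^ (2 * n + 1)) ?D" unfolding aF by (rule gpow_gsubst)
    also have "\<dots> = gsubst n 0 ?D"
    proof (rule gsubst_cong)
      fix m assume "m \<le> n"
      then have "m < 2 * n + 1" by simp
      then have "fps_nth (F1 ^ (2 * n + 1)) m = 0"
        using startsby_zero_power_prefix[OF F10, of "2 * n + 1"] by blast
      then show "fps_nth (F1 ^ (2 * n + 1)) m = fps_nth 0 m" by simp
    qed
    finally show ?thesis by (simp add: gsubst_zero)
  qed
  have expo: "(\<Sum>A\<in>{A. A \<subseteq> {1..n} \<and> card A \<ge> 2}. gsc (w (card A)) (f0 A)) = ?a - ?b"
    by (rule exponent_identity)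
  have gexpS: "gexp n (?a - ?b) = gmul ?Ea (gone - ?b)"
    by (rule gexp_diff[OF pa pb bb fa fb a0 b0 aN])
  define E' where "E' = fps_exp 1 oo F1"
  have Ea: "?Ea = gsubst n E' ?D" unfolding aF E'_def by (rule gexp_gsubst[OF F10])
  define G where "G = gmul ?H ?Ea"
  have G: "G = gsubst n (h * E') ?D" by (simp add: G_def Ea gsubst_mult)
  have pG: "par G 0" unfolding G by (rule par_gsubst)
  have fG: "fsup G" unfolding G by (rule fsup_gsubst)
  define K where "K = gmul G ?V"
  have K: "K = gsubst n (h * E' * Vs w) ?D" by (simp add: K_def G gsubst_mult)
  have psK: "psupp K" unfolding K by (rule psupp_gsubst)
  have pD: "par ?D 0" unfolding dotpsi_Tn by (rule par_Tn)
  have W2: "?W2 = gmul ?D ?V"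
    by (simp only: wser2_eq gsubst_mult[symmetric] gsubst_X)
  have GB: "gmul G ?b = gmul K ?P"
  proof -
    have "gmul G ?b = gmul (gmul G ?P) ?V" by (simp add: gmul_assoc)
    also have "\<dots> = gmul (gmul ?P G) ?V" by (simp add: gmul_comm_even[OF pG pP])
    also have "\<dots> = gmul ?P K" by (simp add: gmul_assoc K_def)
    also have "\<dots> = gmul K ?P" by (rule gmul_comm_even2[OF pP]) (simp add: K_def par_gmul[OF pG pV, simplified])
    finally show ?thesis .
  qed
  have GW: "gmul G ?W2 = gmul K ?D"
  proof -
    have "gmul G ?W2 = gmul G (gmul ?V ?D)" by (simp add: W2 gmul_comm_even[OF pD pV])
    also have "\<dots> = gmul K ?D" by (simp add: gmul_assoc K_def)
    finally show ?thesis .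
  qed
  have eq1: "berezin n (gmul G (gone - ?b)) = berezin n (gmul G (gone - ?W2))"
    by (simp only: gmul_diff_right gmul_one_right[OF fG] berezin_diff GB GW berezin_KP[OF psK])
  have first: "berezin n (gmul ?H (gexp n (\<Sum>A\<in>{A. A \<subseteq> {1..n} \<and> card A \<ge> 2}. gsc (w (card A)) (f0 A))))
       = berezin n (gmul (gmul ?H ?Ea) (gone - ?W2))"
  proof -
    have "gmul ?H (gexp n (\<Sum>A\<in>{A. A \<subseteq> {1..n} \<and> card A \<ge> 2}. gsc (w (card A)) (f0 A))) = gmul G (gone - ?b)"
      by (simp only: expo gexpS G_def gmul_assoc)
    then show ?thesis using eq1 by (simp only: G_def)
  qed
  have second: "berezin n (gmul (gmul ?H ?Ea) (gone - ?W2))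
       = fact n * fps_nth (h * (1 - wser2 w) * (fps_exp 1 oo (of_nat n * wser1 w))) n"
  proof -
    have "gone - ?W2 = gsubst n (1 - wser2 w) ?D" by (simp only: gsubst_diff gsubst_one)
    then have "gmul (gmul ?H ?Ea) (gone - ?W2) = gsubst n (h * E' * (1 - wser2 w)) ?D"
      by (simp only: G_def[symmetric] G gsubst_mult)
    moreover have "h * E' * (1 - wser2 w) = h * (1 - wser2 w) * (fps_exp 1 oo (of_nat n * wser1 w))"
      by (simp add: E'_def F1_def fps_of_nat ac_simps)
    ultimately show ?thesis by (simp add: berezin_gsubst)
  qed
  show ?thesis using first second by simp
qed


end
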